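(* Let $\mathcal{A}$ be a Desargues affine plane, let $\ell_1=\ell^{OI}$ and $\ell_2$ be lines of $\mathcal{A}$ ($O\neq I$), and let $P_P:\ell_1\to\ell_2$ be a parallel projection. Equip $\ell_1$ with the skew field structure with zero $O$ and unit $I$, and $\ell_2$ with the skew field structure with zero $P_P(O)$ and unit $P_P(I)$. Then for all $A,B,C\in\ell_1$ with $B\neq C$, \[ P_P(r(A,B;C))=r(P_P(A),P_P(B);P_P(C)), \] where the ratio on the left is computed in $\ell_1$ and the ratio on the right in $\ell_2$.
   Context: A Desargues affine plane is an incidence structure of points and lines in which any two distinct points lie on exactly one line, through a point not on a line $\ell$ there is exactly one line disjoint from $\ell$ (Playfair), there exist three non-collinear points, and Desargues' axiom holds: if $A,B,C,A',B',C'$ are points such that the pairwise distinct lines $AA',BB',CC'$ are either all parallel or all pass through one point, and $AB\parallel A'B'$, $BC\parallel B'C'$ (with $AB\neq A'B'$, $BC\neq B'C'$, $A\ne C$, $A'\ne C'$), then $AC\parallel A'C'$. Skew field on a line: for distinct points $O,I$ and points $A,B$ on the line $\ell^{OI}$, addition is defined by: choose a point $B_1\notin\ell^{OI}$; let $P_1$ be the intersection of the line through $B_1$ parallel to $\ell^{OI}$ with the line through $A$ parallel to $OB_1$; then $A+B$ is the intersection of $\ell^{OI}$ with the line through $P_1$ parallel to $BB_1$. Multiplication is defined by: choose $B_1\notin\ell^{OI}$; let $P_1$ be the intersection of the line through $A$ parallel to $IB_1$ with the line $OB_1$; then $A\cdot B$ is the intersection of $\ell^{OI}$ with the line through $P_1$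 parallel to $BB_1$. These operations do not depend on the choice of $B_1$ and make $(\ell^{OI},+,\cdot)$ a skew field with zero $O$ and unit $I$; the same construction applies to any line with any chosen pair of distinct points as zero and unit. $-X$ and $X^{-1}$ denote additive and multiplicative inverses, $X-Y=X+(-Y)$. Ratio of three points on such a line: $r(A,B;C)=(B-C)^{-1}(A-C)$ for $B\neq C$. A parallel projection between lines $\ell_1,\ell_2$ is a map $P_P:\ell_1\to\ell_2$ such that for all $A,B\in\ell_1$ the lines $A\,P_P(A)$ and $B\,P_P(B)$ are parallel (it is a bijection). *)

theory Defs
  imports Main
begin

definition line_of :: "'p set set \<Rightarrow> 'p \<Rightarrow> 'p \<Rightarrow> 'p set" where
  "line_of L A B = (THE l. l \<in> L \<and> A \<in> l \<and> B \<in> l)"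

definition par :: "'p set set \<Rightarrow> 'p set \<Rightarrow> 'p set \<Rightarrow> bool" where
  "par L l m \<longleftrightarrow> l \<in> L \<and> m \<in> L \<and> (l = m \<or> l \<inter> m = {})"

definition par_line :: "'p set set \<Rightarrow> 'p \<Rightarrow> 'p set \<Rightarrow> 'p set" where
  "par_line L P l = (THE m. m \<in> L \<and> P \<in> m \<and> par L m l)"

definition meet :: "'p set \<Rightarrow> 'p set \<Rightarrow> 'p" where
  "meet l m = (THE X. X \<in> l \<and> X \<in> m)"

definition affine_plane :: "'p set set \<Rightarrow> bool" where
  "affine_plane L \<longleftrightarrow>
     (\<forall>A B. A \<noteq> B \<longrightarrow> (\<exists>!l. l \<in> L \<and> A \<in> l \<and> B \<in> l)) \<and>
     (\<forall>l P. l \<in> L \<and> P \<notin> l \<longrightarrow> (\<exists>!m. m \<in> L \<and> P \<in> m \<and> l \<inter> m = {})) \<and>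
     (\<exists>A B C. \<not> (\<exists>l\<in>L. A \<in> l \<and> B \<in> l \<and> C \<in> l))"

definition desargues :: "'p set set \<Rightarrow> bool" where
  "desargues L \<longleftrightarrow>
     (\<forall>A B C A' B' C'.
        A \<noteq> A' \<and> B \<noteq> B' \<and> C \<noteq> C' \<and> A \<noteq> B \<and> B \<noteq> C \<and> A \<noteq> C \<and>
        A' \<noteq> B' \<and> B' \<noteq> C' \<and> A' \<noteq> C' \<and>
        line_of L A A' \<noteq> line_of L B B' \<and> line_of L B B' \<noteq> line_of L C C' \<and>
        line_of L A A' \<noteq> line_of L C C' \<and>
        ((par L (line_of L A A') (line_of L B B') \<and> par L (line_of L B B') (line_of L C C')) \<or>
         (\<exists>P. P \<in> line_of L A A' \<and> P \<in> line_of L B B' \<and> P \<in> line_of L C C')) \<and>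
        par L (line_of L A B) (line_of L A' B') \<and> line_of L A B \<noteq> line_of L A' B' \<and>
        par L (line_of L B C) (line_of L B' C') \<and> line_of L B C \<noteq> line_of L B' C'
        \<longrightarrow> par L (line_of L A C) (line_of L A' C'))"

definition desargues_affine_plane :: "'p set set \<Rightarrow> bool" where
  "desargues_affine_plane L \<longleftrightarrow> affine_plane L \<and> desargues L"

text \<open>Skew field operations on the line OI (zero O, unit I), with an
  auxiliary point B1 off the line (the result does not depend on the choice).\<close>

definition sf_add :: "'p set set \<Rightarrow> 'p \<Rightarrow> 'p \<Rightarrow> 'p \<Rightarrow> 'p \<Rightarrow> 'p" where
  "sf_add L Z U A B =
    (let l = line_of L Z U;
         B1 = (SOME X. X \<notin> l);
         P1 = meet (par_line L B1 l) (par_line L A (line_of L Z B1))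
     in meet l (par_line L P1 (line_of L B B1)))"

definition sf_mul :: "'p set set \<Rightarrow> 'p \<Rightarrow> 'p \<Rightarrow> 'p \<Rightarrow> 'p \<Rightarrow> 'p" where
  "sf_mul L Z U A B =
    (let l = line_of L Z U;
         B1 = (SOME X. X \<notin> l);
         P1 = meet (par_line L A (line_of L U B1)) (line_of L Z B1)
     in meet l (par_line L P1 (line_of L B B1)))"

definition sf_neg :: "'p set set \<Rightarrow> 'p \<Rightarrow> 'p \<Rightarrow> 'p \<Rightarrow> 'p" where
  "sf_neg L Z U X = (THE Y. Y \<in> line_of L Z U \<and> sf_add L Z U X Y = Z)"

definition sf_inv :: "'p set set \<Rightarrow> 'p \<Rightarrow> 'p \<Rightarrow> 'p \<Rightarrow> 'p" where
  "sf_inv L Z U X = (THE Y. Y \<in> line_of L Z U \<and> sf_mul L Z U X Y = U)"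

definition sf_sub :: "'p set set \<Rightarrow> 'p \<Rightarrow> 'p \<Rightarrow> 'p \<Rightarrow> 'p \<Rightarrow> 'p" where
  "sf_sub L Z U X Y = sf_add L Z U X (sf_neg L Z U Y)"

definition ratio :: "'p set set \<Rightarrow> 'p \<Rightarrow> 'p \<Rightarrow> 'p \<Rightarrow> 'p \<Rightarrow> 'p \<Rightarrow> 'p" where
  "ratio L Z U A B C = sf_mul L Z U (sf_inv L Z U (sf_sub L Z U B C)) (sf_sub L Z U A C)"

definition parallel_projection :: "'p set set \<Rightarrow> 'p set \<Rightarrow> 'p set \<Rightarrow> ('p \<Rightarrow> 'p) \<Rightarrow> bool" where
  "parallel_projection L l1 l2 f \<longleftrightarrow> l1 \<in> L \<and> l2 \<in> L \<and>
     (\<exists>d\<in>L. \<not> par L d l1 \<and> \<not> par L d l2 \<and>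
        (\<forall>A\<in>l1. f A \<in> l2 \<and> f A \<in> par_line L A d))"

end

theory Submission
  imports Defs
begin


locale AP =
  fixes L :: "'p set set"
  assumes ap: "affine_plane L" and twop: "\<exists>A B::'p. A \<noteq> B"
begin

abbreviation ln where "ln \<equiv> line_of L"
abbreviation pl where "pl \<equiv> par_line L"
abbreviation pr where "pr \<equiv> par L"

lemma ax1: "A \<noteq> B \<Longrightarrow> \<exists>!l. l \<in> L \<and> A \<in> l \<and> B \<in> l"
  using ap[unfolded affine_plane_def, THEN conjunct1] by simp

lemma ax2: "l \<in> L \<Longrightarrow> P \<notin> l \<Longrightarrow> \<exists>!m. m \<in> L \<and> P \<in> m \<and> l \<inter> m = {}"
  using ap[unfolded affine_plane_def, THEN conjunct2, THEN conjunct1] by simp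

lemma ax3: "\<exists>A B C. \<not> (\<exists>l\<in>L. A \<in> l \<and> B \<in> l \<and> C \<in> l)"
  using ap[unfolded affine_plane_def, THEN conjunct2, THEN conjunct2] by simp

lemma ln_props: assumes "A \<noteq> B" shows "ln A B \<in> L" "A \<in> ln A B" "B \<in> ln A B"
proof -
  have "ln A B \<in> L \<and> A \<in> ln A B \<and> B \<in> ln A B"
    unfolding line_of_def by (rule theI'[OF ax1[OF assms]])
  then show "ln A B \<in> L" "A \<in> ln A B" "B \<in> ln A B" by auto
qed

lemma two_pts: assumes "l \<in> L" "m \<in> L" "A \<in> l" "A \<in> m" "B \<in> l" "B \<in> m" "A \<noteq> B" shows "l = m"
proof -
  obtain l0 where "l0 \<in> L \<and> A \<in> l0 \<and> B \<in> l0" and u: "\<forall>y. y \<in> L \<and> A \<in> y \<and> B \<in> y \<longrightarrow> y = l0"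
    using ax1[OF assms(7)] by (rule ex1E)
  have "l = l0" using u assms(1,3,5) by blast
  moreover have "m = l0" using u assms(2,4,6) by blast
  ultimately show ?thesis by simp
qed

lemma ln_eq: "l \<in> L \<Longrightarrow> A \<in> l \<Longrightarrow> B \<in> l \<Longrightarrow> A \<noteq> B \<Longrightarrow> ln A B = l"
  using two_pts[of l "ln A B" A B] ln_props[of A B] by simp

lemma ln_sym: "ln A B = ln B A"
proof -
  have "(\<lambda>l. l \<in> L \<and> A \<in> l \<and> B \<in> l) = (\<lambda>l. l \<in> L \<and> B \<in> l \<and> A \<in> l)" by (rule ext) auto
  then show ?thesis unfolding line_of_def by simp
qed

lemma par_refl: "l \<in> L \<Longrightarrow> pr l l" unfolding par_def by auto
lemma par_sym: "pr l m \<Longrightarrow> pr m l" unfolding par_def by auto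
lemma par_L: "pr l m \<Longrightarrow> l \<in> L" "pr l m \<Longrightarrow> m \<in> L" unfolding par_def by auto

lemma par_int: "pr l m \<Longrightarrow> P \<in> l \<Longrightarrow> P \<in> m \<Longrightarrow> l = m"
  unfolding par_def by auto

lemma par_trans: assumes "pr l m" "pr m k" shows "pr l k"
proof (cases "l = k \<or> l \<inter> k = {}")
  case True then show ?thesis using assms unfolding par_def by auto
next
  case False
  then obtain P where P: "P \<in> l" "P \<in> k" "l \<noteq> k" by auto
  have lm: "l \<inter> m = {}" using assms P unfolding par_def by auto
  have mk: "m \<inter> k = {}" using assms P unfolding par_def by auto
  have "P \<notin> m" using lm P by auto
  then have u: "\<exists>!n. n \<in> L \<and> P \<in> n \<and> m \<inter> n = {}" using ax2[OF par_L(2)[OF assms(1)]] by simp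
  obtain n0 where "n0 \<in> L \<and> P \<in> n0 \<and> m \<inter> n0 = {}" and u2: "\<forall>y. y \<in> L \<and> P \<in> y \<and> m \<inter> y = {} \<longrightarrow> y = n0"
    using u by (rule ex1E)
  have LL: "l \<in> L" "k \<in> L" using assms par_L by auto
  have ml: "m \<inter> l = {}" using lm by auto
  have "l = n0" using u2 LL(1) P(1) ml by blast
  moreover have "k = n0" using u2 LL(2) P(2) mk by blast
  ultimately have "l = k" by simp
  then show ?thesis using P by auto
qed

lemma pl_ex: assumes "l \<in> L" shows "\<exists>!m. m \<in> L \<and> P \<in> m \<and> pr m l"
proof -
  have ex: "\<exists>m. m \<in> L \<and> P \<in> m \<and> pr m l"
  proof (cases "P \<in> l")
    case True then show ?thesis using assms par_refl by blast
  next
    case False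
    then obtain m where "m \<in> L" "P \<in> m" "l \<inter> m = {}" using ax2 assms by blast
    then show ?thesis using assms unfolding par_def by blast
  qed
  show ?thesis
  proof (rule ex_ex1I[OF ex])
    fix m n assume "m \<in> L \<and> P \<in> m \<and> pr m l" "n \<in> L \<and> P \<in> n \<and> pr n l"
    then have "pr m n" using par_trans[of m l n] par_sym[of n l] by auto
    then show "m = n" using par_int[of m n P] \<open>m \<in> L \<and> P \<in> m \<and> pr m l\<close> \<open>n \<in> L \<and> P \<in> n \<and> pr n l\<close> by auto
  qed
qed

lemma pl_props: assumes "l \<in> L" shows "pl P l \<in> L" "P \<in> pl P l" "pr (pl P l) l"
proof -
  have "pl P l \<in> L \<and> P \<in> pl P l \<and> pr (pl P l) l"
    unfolding par_line_def by (rule theI'[OF pl_ex[OF assms]])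
  then show "pl P l \<in> L" "P \<in> pl P l" "pr (pl P l) l" by auto
qed

lemma pl_unique: "l \<in> L \<Longrightarrow> m \<in> L \<Longrightarrow> P \<in> m \<Longrightarrow> pr m l \<Longrightarrow> pl P l = m"
proof -
  assume a: "l \<in> L" "m \<in> L" "P \<in> m" "pr m l"
  have "pl P l \<in> L \<and> P \<in> pl P l \<and> pr (pl P l) l" using pl_props[OF a(1)] by auto
  then show "pl P l = m" using pl_ex[OF a(1), of P] a by auto
qed

lemma pl_self: "l \<in> L \<Longrightarrow> P \<in> l \<Longrightarrow> pl P l = l"
  using pl_unique[of l l P] par_refl[of l] by simp

lemma pl_pareq: "pr l l' \<Longrightarrow> pl P l = pl P l'"
proof -
  assume a: "pr l l'"
  have l: "l \<in> L" "l' \<in> L" using a par_L by auto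
  have "pr (pl P l) l'" using par_trans[OF pl_props(3)[OF l(1)] a] .
  then show ?thesis using pl_unique[OF l(2) pl_props(1)[OF l(1)] pl_props(2)[OF l(1)]] by auto
qed

lemma pl_mem: "l \<in> L \<Longrightarrow> Q \<in> pl P l \<Longrightarrow> pl Q l = pl P l"
  using pl_unique[of l "pl P l" Q] pl_props[of l P] by simp

lemma pl_disj: "l \<in> L \<Longrightarrow> P \<notin> l \<Longrightarrow> pl P l \<inter> l = {}"
proof -
  assume a: "l \<in> L" "P \<notin> l"
  have "pl P l \<noteq> l" using pl_props(2)[OF a(1), of P] a(2) by auto
  then show ?thesis using pl_props(3)[OF a(1), of P] unfolding par_def by auto
qed

lemma meet_eq: "l \<in> L \<Longrightarrow> m \<in> L \<Longrightarrow> l \<noteq> m \<Longrightarrow> X \<in> l \<Longrightarrow> X \<in> m \<Longrightarrow> meet l m = X"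
proof -
  assume a: "l \<in> L" "m \<in> L" "l \<noteq> m" "X \<in> l" "X \<in> m"
  show "meet l m = X" unfolding meet_def
  proof (rule the_equality)
    show "X \<in> l \<and> X \<in> m" using a by auto
    fix Y assume "Y \<in> l \<and> Y \<in> m"
    then show "Y = X" using two_pts[of l m Y X] a by auto
  qed
qed

lemma meet_props: assumes "l \<in> L" "m \<in> L" "\<not> pr l m" shows "meet l m \<in> l" "meet l m \<in> m"
proof -
  obtain X where "X \<in> l" "X \<in> m" "l \<noteq> m" using assms unfolding par_def by auto
  then have "meet l m = X" using meet_eq assms by auto
  then show "meet l m \<in> l" "meet l m \<in> m" using \<open>X \<in> l\<close> \<open>X \<in> m\<close> by auto
qed

lemma meet_sym: "l \<in> L \<Longrightarrow> m \<in> L \<Longrightarrow> \<not> pr l m \<Longrightarrow> meet l m = meet m l"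
proof -
  assume a: "l \<in> L" "m \<in> L" "\<not> pr l m"
  have "l \<noteq> m" using a par_refl by auto
  then show ?thesis using meet_eq[of l m "meet l m"] meet_eq[of m l "meet l m"] meet_props[OF a] a by auto
qed

lemma nonpar: "\<not> pr l m \<Longrightarrow> pr l l' \<Longrightarrow> pr m m' \<Longrightarrow> \<not> pr l' m'"
proof
  assume a: "\<not> pr l m" "pr l l'" "pr m m'" "pr l' m'"
  have "pr l m'" using par_trans[OF a(2) a(4)] .
  then have "pr l m" using par_trans[OF _ par_sym[OF a(3)]] by auto
  then show False using a(1) by auto
qed

lemma par_ln: "A \<noteq> B \<Longrightarrow> pr (ln A B) m \<Longrightarrow> pl A m = ln A B"
proof -
  assume a: "A \<noteq> B" "pr (ln A B) m"
  show ?thesis using pl_unique[OF par_L(2)[OF a(2)] ln_props(1)[OF a(1)] ln_props(2)[OF a(1)] a(2)] .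
qed

lemma ln_pl: assumes "l \<in> L" "B \<in> pl A l" "A \<noteq> B" shows "ln A B = pl A l" "pr (ln A B) l"
proof -
  show "ln A B = pl A l" using ln_eq[of "pl A l" A B] pl_props[OF assms(1), of A] assms by simp
  then show "pr (ln A B) l" using pl_props[OF assms(1), of A] by simp
qed

lemma ln_nonpar: assumes "A \<noteq> B" "C \<notin> ln A B" shows "\<not> pr (ln A B) (ln A C)"
proof
  assume "pr (ln A B) (ln A C)"
  have AC: "A \<noteq> C" using assms ln_props(2)[OF assms(1)] by auto
  have "ln A B = ln A C" using par_int[OF \<open>pr (ln A B) (ln A C)\<close> ln_props(2)[OF assms(1)] ln_props(2)[OF AC]] .
  then show False using assms(2) ln_props(3)[OF AC] by simp
qed

lemma off_line: "l \<in> L \<Longrightarrow> \<exists>X. X \<notin> l"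
proof -
  assume l: "l \<in> L"
  obtain A B C where "\<not> (\<exists>l\<in>L. A \<in> l \<and> B \<in> l \<and> C \<in> l)" using ax3 by auto
  then have "A \<notin> l \<or> B \<notin> l \<or> C \<notin> l" using l by auto
  then show ?thesis by auto
qed

lemma two_points: "\<exists>A B::'p. A \<noteq> B"
  using twop by auto

end



context AP begin

lemma line_two: assumes l: "l \<in> L" shows "\<exists>A B. A \<noteq> B \<and> A \<in> l \<and> B \<in> l"
proof (rule ccontr)
  assume H: "\<not> (\<exists>A B. A \<noteq> B \<and> A \<in> l \<and> B \<in> l)"
  obtain p where p: "l \<subseteq> {p}"
  proof (cases "l = {}")
    case True then show ?thesis using that by auto
  next
    case False then obtain q where "q \<in> l" by auto
    then have "l \<subseteq> {q}" using H by auto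
    then show ?thesis using that by auto
  qed
  obtain X where X: "X \<noteq> p" using two_points by metis
  have Xl: "X \<notin> l" using X p by auto
  define k where "k = ln X p"
  have k: "k \<in> L" "X \<in> k" "p \<in> k" using ln_props X k_def by auto
  obtain Y where Y: "Y \<notin> k" using off_line k by auto
  have XY: "X \<noteq> Y" using Y k by auto
  have pY: "p \<noteq> Y" using Y k by auto
  define n1 where "n1 = ln X Y"
  have n1: "n1 \<in> L" "X \<in> n1" "Y \<in> n1" using ln_props XY n1_def by auto
  have pn1: "p \<notin> n1"
  proof
    assume "p \<in> n1"
    then have "n1 = k" using two_pts n1 k X by metis
    then show False using Y n1 by auto
  qed
  define n2 where "n2 = pl X (ln p Y)"
  have lpY: "ln p Y \<in> L" "p \<in> ln p Y" "Y \<in> ln p Y" using ln_props pY by auto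
  have n2: "n2 \<in> L" "X \<in> n2" "pr n2 (ln p Y)" using pl_props lpY n2_def by auto
  have pn2: "p \<notin> n2"
  proof
    assume "p \<in> n2"
    then have "n2 = ln p Y" using par_int n2 lpY by metis
    then have "X \<in> ln p Y" using n2 by auto
    then have "ln p Y = k" using two_pts lpY k X by metis
    then show False using Y lpY by auto
  qed
  have ne: "n1 \<noteq> n2"
  proof
    assume "n1 = n2"
    then have "Y \<in> n2" using n1 by auto
    then have "n2 = ln p Y" using par_int n2 lpY by metis
    then show False using pn2 lpY by auto
  qed
  have d1: "l \<inter> n1 = {}" using pn1 p by auto
  have d2: "l \<inter> n2 = {}" using pn2 p by auto
  have "\<exists>!m. m \<in> L \<and> X \<in> m \<and> l \<inter> m = {}" using ax2 l Xl by auto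
  then show False using n1 n2 d1 d2 ne by blast
qed

definition big where "big \<longleftrightarrow> (\<forall>l\<in>L. \<forall>m\<in>L. l \<noteq> m \<longrightarrow> (\<exists>W. W \<notin> l \<and> W \<notin> m))"

lemma small_aux:
  assumes l: "l \<in> L" and m: "m \<in> L" and lm: "l \<inter> m = {}" and cov: "\<And>W. W \<in> l \<or> W \<in> m"
    and abc: "a \<in> l" "b \<in> l" "c \<in> l" "a \<noteq> b" "a \<noteq> c" "b \<noteq> c"
    and y: "y1 \<in> m" "y2 \<in> m" "y1 \<noteq> y2"
  shows False
proof -
  have a_y1: "a \<noteq> y1" using lm abc y by auto
  define n where "n = ln y1 a"
  have n: "n \<in> L" "y1 \<in> n" "a \<in> n" using ln_props a_y1 n_def by auto
  have y2n: "y2 \<notin> n"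
  proof
    assume "y2 \<in> n" then have "n = m" using two_pts n m y by metis
    then show False using n abc lm by auto
  qed
  have disj: "ln y2 z \<inter> n = {}" if z: "z \<in> l" "z \<noteq> a" for z
  proof (rule ccontr)
    assume "ln y2 z \<inter> n \<noteq> {}"
    then obtain W where W: "W \<in> ln y2 z" "W \<in> n" by auto
    have yz: "y2 \<noteq> z" using lm z y by auto
    have lz: "ln y2 z \<in> L" "y2 \<in> ln y2 z" "z \<in> ln y2 z" using ln_props yz by auto
    show False
    proof (cases "W \<in> l")
      case True
      have "W = z"
      proof (rule ccontr)
        assume "W \<noteq> z" then have "ln y2 z = l" using two_pts lz l True W z by metis
        then show False using lz y lm by auto
      qed
      then have "n = l" using two_pts n l W abc z True by metis
      then show False using n y lm by auto
    next
      case False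
      then have Wm: "W \<in> m" using cov by auto
      have "W = y2"
      proof (rule ccontr)
        assume "W \<noteq> y2" then have "ln y2 z = m" using two_pts lz m Wm W y by metis
        then show False using lz z lm by auto
      qed
      then show False using y2n W by auto
    qed
  qed
  have y2l: "y2 \<notin> n" by (rule y2n)
  have ex1: "\<exists>!k. k \<in> L \<and> y2 \<in> k \<and> n \<inter> k = {}" using ax2 n y2n by auto
  have yb: "y2 \<noteq> b" "y2 \<noteq> c" using lm abc y by auto
  have lb: "ln y2 b \<in> L" "y2 \<in> ln y2 b" "b \<in> ln y2 b" using ln_props yb by auto
  have lc: "ln y2 c \<in> L" "y2 \<in> ln y2 c" "c \<in> ln y2 c" using ln_props yb by auto
  have "ln y2 b \<noteq> ln y2 c"
  proof
    assume "ln y2 b = ln y2 c"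
    then have "ln y2 b = l" using two_pts lb lc l abc by metis
    then show False using lb y lm by auto
  qed
  moreover have "n \<inter> ln y2 b = {}" "n \<inter> ln y2 c = {}" using disj abc by auto
  ultimately show False using ex1 lb lc by blast
qed

lemma not_big_small: assumes nb: "\<not> big" and k: "k \<in> L" and abc: "a \<in> k" "b \<in> k" "c \<in> k"
  shows "a = b \<or> a = c \<or> b = c"
proof (rule ccontr)
  assume ne: "\<not> (a = b \<or> a = c \<or> b = c)"
  obtain l m where lm: "l \<in> L" "m \<in> L" "l \<noteq> m" and cov: "\<And>W. W \<in> l \<or> W \<in> m"
    using nb unfolding big_def by blast
  have disj: "l \<inter> m = {}"
  proof (rule ccontr)
    assume "l \<inter> m \<noteq> {}" then obtain Oo where Oo: "Oo \<in> l" "Oo \<in> m" by auto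
    obtain x where x: "x \<in> l" "x \<noteq> Oo" using line_two[OF lm(1)] by metis
    obtain y where y: "y \<in> m" "y \<noteq> Oo" using line_two[OF lm(2)] by metis
    have xm: "x \<notin> m" using two_pts lm Oo x by metis
    have yl: "y \<notin> l" using two_pts lm Oo y by metis
    have xy: "x \<noteq> y" using xm y by auto
    define n where "n = ln x y"
    have n: "n \<in> L" "x \<in> n" "y \<in> n" using ln_props xy n_def by auto
    have On: "Oo \<notin> n"
    proof
      assume "Oo \<in> n" then have "n = l" using two_pts n lm Oo x by metis
      then show False using n yl by auto
    qed
    obtain k' where k': "k' \<in> L" "Oo \<in> k'" "n \<inter> k' = {}" using ax2[OF n(1) On] by auto
    obtain z where z: "z \<in> k'" "z \<noteq> Oo" using line_two[OF k'(1)] by metis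
    show False
    proof (cases "z \<in> l")
      case True then have "k' = l" using two_pts k' lm Oo z by metis
      then show False using k' n x by auto
    next
      case False then have "z \<in> m" using cov by auto
      then have "k' = m" using two_pts k' lm Oo z by metis
      then show False using k' n y by auto
    qed
  qed
  have "k = l \<or> k = m"
  proof -
    have "(a \<in> l \<and> b \<in> l) \<or> (a \<in> l \<and> c \<in> l) \<or> (b \<in> l \<and> c \<in> l) \<or>
          (a \<in> m \<and> b \<in> m) \<or> (a \<in> m \<and> c \<in> m) \<or> (b \<in> m \<and> c \<in> m)" using cov by metis
    then show ?thesis using two_pts k lm abc ne by metis
  qed
  then show False
  proof
    assume "k = l"
    obtain y1 y2 where "y1 \<in> m" "y2 \<in> m" "y1 \<noteq> y2" using line_two[OF lm(2)] by metis
    then show False using small_aux[OF lm(1) lm(2) disj cov] abc ne \<open>k = l\<close> by metis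
  next
    assume "k = m"
    obtain y1 y2 where "y1 \<in> l" "y2 \<in> l" "y1 \<noteq> y2" using line_two[OF lm(1)] by metis
    moreover have "m \<inter> l = {}" using disj by auto
    ultimately show False using small_aux[OF lm(2) lm(1)] cov abc ne \<open>k = m\<close> by metis
  qed
qed

lemma big_third: assumes "big" "l \<in> L" "m \<in> L" "l \<noteq> m" obtains W where "W \<notin> l" "W \<notin> m"
  using assms unfolding big_def by blast

end



locale DAP = AP +
  assumes des: "desargues L"
begin

lemma desarg:
  assumes "A \<noteq> A'" "B \<noteq> B'" "C \<noteq> C'" "A \<noteq> B" "B \<noteq> C" "A \<noteq> C"
    "A' \<noteq> B'" "B' \<noteq> C'" "A' \<noteq> C'"
    "ln A A' \<noteq> ln B B'" "ln B B' \<noteq> ln C C'" "ln A A' \<noteq> ln C C'"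
    "(pr (ln A A') (ln B B') \<and> pr (ln B B') (ln C C')) \<or>
         (\<exists>P. P \<in> ln A A' \<and> P \<in> ln B B' \<and> P \<in> ln C C')"
    "pr (ln A B) (ln A' B')" "ln A B \<noteq> ln A' B'"
    "pr (ln B C) (ln B' C')" "ln B C \<noteq> ln B' C'"
  shows "pr (ln A C) (ln A' C')"
proof -
  have H: "\<forall>A B C A' B' C'.
        A \<noteq> A' \<and> B \<noteq> B' \<and> C \<noteq> C' \<and> A \<noteq> B \<and> B \<noteq> C \<and> A \<noteq> C \<and>
        A' \<noteq> B' \<and> B' \<noteq> C' \<and> A' \<noteq> C' \<and>
        ln A A' \<noteq> ln B B' \<and> ln B B' \<noteq> ln C C' \<and>
        ln A A' \<noteq> ln C C' \<and>
        ((pr (ln A A') (ln B B') \<and> pr (ln B B') (ln C C')) \<or>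
         (\<exists>P. P \<in> ln A A' \<and> P \<in> ln B B' \<and> P \<in> ln C C')) \<and>
        pr (ln A B) (ln A' B') \<and> ln A B \<noteq> ln A' B' \<and>
        pr (ln B C) (ln B' C') \<and> ln B C \<noteq> ln B' C'
        \<longrightarrow> pr (ln A C) (ln A' C')" using des unfolding desargues_def by blast
  show ?thesis using H[rule_format, of A A' B B' C C'] assms by blast
qed

definition vtx where "vtx P Q R = meet (pl R (ln P Q)) (pl Q (ln P R))"

lemma vtx_props:
  assumes PQ: "P \<noteq> Q" and R: "R \<notin> ln P Q"
  shows "vtx P Q R \<in> pl R (ln P Q)" "vtx P Q R \<in> pl Q (ln P R)"
    "vtx P Q R \<notin> ln P Q" "vtx P Q R \<noteq> R" "vtx P Q R \<noteq> Q"
    "ln R (vtx P Q R) = pl R (ln P Q)" "pr (ln R (vtx P Q R)) (ln P Q)"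
    "ln Q (vtx P Q R) = pl Q (ln P R)" "pr (ln Q (vtx P Q R)) (ln P R)"
proof -
  have PR: "P \<noteq> R" using R ln_props PQ by auto
  have lPQ: "ln P Q \<in> L" "P \<in> ln P Q" "Q \<in> ln P Q" using ln_props PQ by auto
  have lPR: "ln P R \<in> L" "P \<in> ln P R" "R \<in> ln P R" using ln_props PR by auto
  have np: "\<not> pr (ln P Q) (ln P R)" using ln_nonpar PQ R by auto
  have l1: "pl R (ln P Q) \<in> L" "R \<in> pl R (ln P Q)" "pr (pl R (ln P Q)) (ln P Q)" using pl_props lPQ by auto
  have l2: "pl Q (ln P R) \<in> L" "Q \<in> pl Q (ln P R)" "pr (pl Q (ln P R)) (ln P R)" using pl_props lPR by auto
  have np2: "\<not> pr (pl R (ln P Q)) (pl Q (ln P R))" using nonpar[OF np] l1 l2 par_sym by blast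
  show T1: "vtx P Q R \<in> pl R (ln P Q)" "vtx P Q R \<in> pl Q (ln P R)"
    unfolding vtx_def using meet_props[OF l1(1) l2(1) np2] by auto
  have dj: "pl R (ln P Q) \<inter> ln P Q = {}" using pl_disj lPQ R by auto
  show T3: "vtx P Q R \<notin> ln P Q" using T1 dj by auto
  show T4: "vtx P Q R \<noteq> R"
  proof
    assume "vtx P Q R = R"
    then have "R \<in> pl Q (ln P R)" using T1 by auto
    then have "pl Q (ln P R) = ln P R" using par_int l2 lPR by metis
    then have "Q \<in> ln P R" using l2 by auto
    then have "ln P R = ln P Q" using two_pts lPR lPQ PQ by metis
    then show False using R lPR by auto
  qed
  show T5: "vtx P Q R \<noteq> Q" using T3 lPQ by auto
  show "ln R (vtx P Q R) = pl R (ln P Q)" using ln_eq l1 T1 T4 by metis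
  then show "pr (ln R (vtx P Q R)) (ln P Q)" using l1 by simp
  show "ln Q (vtx P Q R) = pl Q (ln P R)" using ln_eq l2 T1 T5 by metis
  then show "pr (ln Q (vtx P Q R)) (ln P R)" using l2 by simp
qed

lemma vtx_unique:
  assumes PQ: "P \<noteq> Q" and R: "R \<notin> ln P Q" and T: "T \<in> pl R (ln P Q)" "T \<in> pl Q (ln P R)"
  shows "vtx P Q R = T"
proof -
  have PR: "P \<noteq> R" using R ln_props PQ by auto
  have lPQ: "ln P Q \<in> L" using ln_props PQ by auto
  have lPR: "ln P R \<in> L" using ln_props PR by auto
  have np: "\<not> pr (ln P Q) (ln P R)" using ln_nonpar PQ R by auto
  have l1: "pl R (ln P Q) \<in> L" "pr (pl R (ln P Q)) (ln P Q)" using pl_props lPQ by auto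
  have l2: "pl Q (ln P R) \<in> L" "pr (pl Q (ln P R)) (ln P R)" using pl_props lPR by auto
  have np2: "\<not> pr (pl R (ln P Q)) (pl Q (ln P R))" using nonpar[OF np] l1 l2 par_sym by blast
  have "pl R (ln P Q) \<noteq> pl Q (ln P R)" using np2 par_refl l1 by auto
  then show ?thesis unfolding vtx_def using meet_eq l1 l2 T by auto
qed

lemma vtx_back:
  assumes PQ: "P \<noteq> Q" and R: "R \<notin> ln P Q"
  shows "vtx R (vtx P Q R) P = Q" "vtx Q P (vtx P Q R) = R"
proof -
  let ?T = "vtx P Q R"
  have PR: "P \<noteq> R" using R ln_props PQ by auto
  have lPQ: "ln P Q \<in> L" "P \<in> ln P Q" "Q \<in> ln P Q" using ln_props PQ by auto
  have lPR: "ln P R \<in> L" "P \<in> ln P R" "R \<in> ln P R" using ln_props PR by auto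
  note V = vtx_props[OF PQ R]
  have RT: "R \<noteq> ?T" using V by auto
  have lRT: "ln R ?T \<in> L" "R \<in> ln R ?T" "?T \<in> ln R ?T" using ln_props RT by auto
  have P1: "P \<notin> ln R ?T" using V(6) pl_disj[OF lPQ(1) R] lPQ by auto
  have e1: "pl P (ln R ?T) = ln P Q" using pl_pareq[OF V(7)] pl_self lPQ by metis
  have e2: "pl ?T (ln R P) = ln Q ?T"
  proof -
    have "pr (ln Q ?T) (ln R P)" using V(9) ln_sym by metis
    then show ?thesis using par_ln[of ?T Q "ln R P"] ln_sym V(5) by metis
  qed
  have QT: "Q \<noteq> ?T" using V by auto
  have lQT: "Q \<in> ln Q ?T" using ln_props QT by auto
  show "vtx R ?T P = Q" using vtx_unique[OF RT P1] e1 e2 lPQ lQT by auto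
  have TQ: "?T \<notin> ln Q P" using V(3) ln_sym by metis
  have e3: "pl ?T (ln Q P) = pl R (ln P Q)" using pl_mem V(1) lPQ ln_sym by metis
  have e4: "pl P (ln Q ?T) = ln P R" using pl_pareq[OF V(9)] pl_self lPR by metis
  show "vtx Q P ?T = R" using vtx_unique[OF PQ[symmetric] TQ] e3 e4 pl_props lPQ lPR by auto
qed

end


context DAP begin

lemma tstep:
  assumes PQ: "P \<noteq> Q" and R: "R \<notin> ln P Q" and S: "S \<notin> ln P Q" and RS: "S \<notin> pl R (ln P Q)"
  shows "pr (ln R S) (ln (vtx P Q R) (vtx P Q S))"
proof -
  let ?R' = "vtx P Q R" and ?S' = "vtx P Q S"
  note VR = vtx_props[OF PQ R] and VS = vtx_props[OF PQ S]
  have lPQ: "ln P Q \<in> L" "P \<in> ln P Q" "Q \<in> ln P Q" using ln_props PQ by auto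
  have PR: "P \<noteq> R" "P \<noteq> S" using R S lPQ by auto
  have lPR: "ln P R \<in> L" "P \<in> ln P R" "R \<in> ln P R" using ln_props PR by auto
  have lPS: "ln P S \<in> L" "P \<in> ln P S" "S \<in> ln P S" using ln_props PR by auto
  have plR: "pl R (ln P Q) \<in> L" "R \<in> pl R (ln P Q)" "pr (pl R (ln P Q)) (ln P Q)" using pl_props lPQ by auto
  have plS: "pl S (ln P Q) \<in> L" "S \<in> pl S (ln P Q)" "pr (pl S (ln P Q)) (ln P Q)" using pl_props lPQ by auto
  have RS': "R \<noteq> S" using RS plR by auto
  have dRS: "pl R (ln P Q) \<inter> pl S (ln P Q) = {}"
  proof -
    have "pr (pl R (ln P Q)) (pl S (ln P Q))" using plR plS par_trans par_sym by blast
    moreover have "pl R (ln P Q) \<noteq> pl S (ln P Q)" using RS plS by auto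
    ultimately show ?thesis unfolding par_def by auto
  qed
  have R'S': "?R' \<noteq> ?S'" using VR(1) VS(1) dRS by auto
  have ne1: "pl R (ln P Q) \<noteq> ln P Q" using R plR by auto
  have ne2: "pl S (ln P Q) \<noteq> ln P Q" using S plS by auto
  have ne3: "pl R (ln P Q) \<noteq> pl S (ln P Q)" using RS plS by auto
  have a1: "ln R P \<noteq> ln ?R' Q"
  proof
    assume "ln R P = ln ?R' Q"
    then have "Q \<in> ln P R" using ln_props VR(5) ln_sym by metis
    then have "ln P R = ln P Q" using two_pts lPR lPQ PQ by metis
    then show False using R lPR by auto
  qed
  have a2: "ln P S \<noteq> ln Q ?S'"
  proof
    assume "ln P S = ln Q ?S'"
    then have "Q \<in> ln P S" using ln_props VS(5) by metis
    then have "ln P S = ln P Q" using two_pts lPS lPQ PQ by metis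
    then show False using S lPS by auto
  qed
  have p1: "pr (ln R P) (ln ?R' Q)" using VR(9) ln_sym par_sym by metis
  have p2: "pr (ln P S) (ln Q ?S')" using VS(9) par_sym by metis
  show ?thesis
    apply (rule desarg[of R ?R' P Q S ?S'])
    using VR VS PQ PR RS' R'S' ne1 ne2 ne3 a1 a2 p1 p2 par_sym ln_sym plR plS
    by auto
qed

lemma ltrans:
  assumes PQ: "P \<noteq> Q" and X: "X \<notin> ln P Q" and S: "S \<notin> ln P Q" and SX: "S \<notin> ln X (vtx P Q X)"
  shows "vtx X (vtx P Q X) S = vtx P Q S"
proof -
  let ?X' = "vtx P Q X" and ?S' = "vtx P Q S"
  note VX = vtx_props[OF PQ X] and VS = vtx_props[OF PQ S]
  have lPQ: "ln P Q \<in> L" using ln_props PQ by auto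
  have XX: "X \<noteq> ?X'" using VX by auto
  have S2: "S \<notin> pl X (ln P Q)" using SX VX(6) by auto
  have st: "pr (ln X S) (ln ?X' ?S')" using tstep[OF PQ X S S2] .
  have XS: "X \<noteq> S" using SX ln_props XX by auto
  have X'S': "?X' \<noteq> ?S'"
  proof
    assume "?X' = ?S'"
    then have "pl X (ln P Q) = pl S (ln P Q)" using pl_mem VX(1) VS(1) lPQ by metis
    then show False using S2 pl_props lPQ by metis
  qed
  have e1: "pl S (ln X ?X') = pl S (ln P Q)" using pl_pareq VX(7) by metis
  have e2: "pl ?X' (ln X S) = ln ?X' ?S'" using par_ln[OF X'S'] st par_sym by metis
  show ?thesis
    apply (rule vtx_unique[OF XX SX])
    using e1 e2 VS ln_props X'S' by auto
qed

end

context AP begin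
definition dilat where
  "dilat \<sigma> \<longleftrightarrow> (\<forall>P Q. P \<noteq> Q \<longrightarrow> \<sigma> P \<noteq> \<sigma> Q \<and> pr (ln P Q) (ln (\<sigma> P) (\<sigma> Q)))"

definition transl where "transl \<sigma> \<longleftrightarrow> dilat \<sigma> \<and> (\<sigma> = id \<or> (\<forall>Y. \<sigma> Y \<noteq> Y))"
end

context DAP begin

lemma dbase:
  assumes BB: "B \<noteq> B'" and R: "R \<notin> ln B B'" and S: "S \<notin> ln B B'" and RS: "R \<noteq> S"
  shows "vtx B B' R \<noteq> vtx B B' S \<and> pr (ln R S) (ln (vtx B B' R) (vtx B B' S))"
proof (cases "S \<in> pl R (ln B B')")
  case False
  have "pr (ln R S) (ln (vtx B B' R) (vtx B B' S))" using tstep[OF BB R S False] .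
  moreover have "vtx B B' R \<noteq> vtx B B' S"
  proof
    assume "vtx B B' R = vtx B B' S"
    then have "pl R (ln B B') = pl S (ln B B')"
      using pl_mem vtx_props(1)[OF BB R] vtx_props(1)[OF BB S] ln_props BB by metis
    then show False using False pl_props ln_props BB by metis
  qed
  ultimately show ?thesis by auto
next
  case True
  let ?k = "pl R (ln B B')"
  have lB: "ln B B' \<in> L" "B \<in> ln B B'" "B' \<in> ln B B'" using ln_props BB by auto
  have k: "?k \<in> L" "R \<in> ?k" "pr ?k (ln B B')" using pl_props lB by auto
  have kS: "pl S (ln B B') = ?k" using pl_mem True lB by auto
  have R'k: "vtx B B' R \<in> ?k" using vtx_props(1)[OF BB R] .
  have S'k: "vtx B B' S \<in> ?k" using vtx_props(1)[OF BB S] kS by auto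
  have BR: "B \<noteq> R" "B \<noteq> S" using R S lB by auto
  have Bk: "B \<notin> ?k" using pl_disj[OF lB(1) R] lB by auto
  have SBR: "S \<notin> ln B R"
  proof
    assume "S \<in> ln B R"
    then have "ln B R = ?k" using two_pts ln_props BR k True RS by metis
    then show False using Bk ln_props BR by auto
  qed
  have np: "\<not> pr (ln B R) (ln B S)" using ln_nonpar BR SBR by auto
  have ne: "vtx B B' R \<noteq> vtx B B' S"
  proof
    assume eq: "vtx B B' R = vtx B B' S"
    have m1: "vtx B B' R \<in> pl B' (ln B R)" using vtx_props(2)[OF BB R] .
    have m2: "vtx B B' R \<in> pl B' (ln B S)" using vtx_props(2)[OF BB S] eq by auto
    have lBR: "ln B R \<in> L" "ln B S \<in> L" using ln_props BR by auto
    have "pl B' (ln B R) \<noteq> pl B' (ln B S)"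
    proof
      assume "pl B' (ln B R) = pl B' (ln B S)"
      then have "pr (ln B R) (ln B S)" using pl_props lBR par_sym par_trans by metis
      then show False using np by auto
    qed
    then have "vtx B B' R = B'" using two_pts pl_props lBR m1 m2 by metis
    then show False using vtx_props(3)[OF BB R] lB by auto
  qed
  have e1: "ln R S = ?k" using ln_eq k True RS by auto
  have e2: "ln (vtx B B' R) (vtx B B' S) = ?k" using ln_eq k R'k S'k ne by auto
  show ?thesis using ne e1 e2 par_refl k by auto
qed

definition trl where
  "trl P Q = (\<lambda>R. if P = Q then R else if R \<notin> ln P Q then vtx P Q R
     else vtx (SOME X. X \<notin> ln P Q) (vtx P Q (SOME X. X \<notin> ln P Q)) R)"

lemma trl_id: "trl P P = id" unfolding trl_def by auto

lemma trl_off: "P \<noteq> Q \<Longrightarrow> R \<notin> ln P Q \<Longrightarrow> trl P Q R = vtx P Q R"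
  unfolding trl_def by auto

lemma trl_facts:
  assumes PQ: "P \<noteq> Q"
  shows "trl P Q P = Q" "\<And>Y. trl P Q Y \<noteq> Y" "\<And>Y. trl P Q Y \<in> pl Y (ln P Q)"
    "big \<Longrightarrow> dilat (trl P Q)"
proof -
  let ?l = "ln P Q"
  define X0 where "X0 = (SOME X. X \<notin> ?l)"
  have lPQ: "?l \<in> L" "P \<in> ?l" "Q \<in> ?l" using ln_props PQ by auto
  have X0: "X0 \<notin> ?l" unfolding X0_def using off_line[OF lPQ(1)] by (metis someI_ex)
  define X0' where "X0' = vtx P Q X0"
  note VX = vtx_props[OF PQ X0, folded X0'_def]
  have XX: "X0 \<noteq> X0'" using VX by auto
  define m0 where "m0 = ln X0 X0'"
  have m0: "m0 = pl X0 ?l" "pr m0 ?l" using VX m0_def by auto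
  have m0L: "m0 \<in> L" "X0 \<in> m0" "X0' \<in> m0" using ln_props XX m0_def by auto
  have dj: "m0 \<inter> ?l = {}" using pl_disj lPQ X0 m0 by auto
  have tin: "trl P Q Y = vtx X0 X0' Y" if "Y \<in> ?l" for Y
    using that PQ unfolding trl_def X0_def X0'_def by auto
  have a: "trl P Q Y = vtx P Q Y" if "Y \<notin> ?l" for Y using trl_off PQ that by auto
  have b: "trl P Q Y = vtx X0 X0' Y" if "Y \<notin> m0" for Y
  proof (cases "Y \<in> ?l")
    case True then show ?thesis using tin by auto
  next
    case False
    then show ?thesis using a ltrans[OF PQ X0 False] that m0_def X0'_def by auto
  qed
  have Yl: "Y \<notin> ln X0 X0'" if "Y \<in> ?l" for Y using that dj m0_def by auto
  show "trl P Q P = Q"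
    using tin[OF lPQ(2)] vtx_back(1)[OF PQ X0] X0'_def by auto
  show "trl P Q Y \<noteq> Y" for Y
  proof (cases "Y \<in> ?l")
    case True then show ?thesis using tin vtx_props(4)[OF XX Yl[OF True]] by auto
  next
    case False then show ?thesis using a vtx_props(4)[OF PQ False] by auto
  qed
  show "trl P Q Y \<in> pl Y ?l" for Y
  proof (cases "Y \<in> ?l")
    case True
    have "trl P Q Y \<in> pl Y (ln X0 X0')" using tin[OF True] vtx_props(1)[OF XX Yl[OF True]] by auto
    then show ?thesis using pl_pareq m0 m0_def by metis
  next
    case False then show ?thesis using a vtx_props(1)[OF PQ False] by auto
  qed
  assume bg: big
  show "dilat (trl P Q)"
    unfolding dilat_def
  proof (intro allI impI)
    fix R S :: 'a assume RS: "R \<noteq> S"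
    show "trl P Q R \<noteq> trl P Q S \<and> pr (ln R S) (ln (trl P Q R) (trl P Q S))"
    proof (cases "R \<notin> ?l \<and> S \<notin> ?l")
      case True then show ?thesis using dbase[OF PQ _ _ RS] a by auto
    next
      case nl: False
      show ?thesis
      proof (cases "R \<notin> m0 \<and> S \<notin> m0")
        case True then show ?thesis using dbase[OF XX _ _ RS] b m0_def by auto
      next
        case False
        have ne: "m0 \<noteq> ?l" using m0L X0 by auto
        obtain W where W: "W \<notin> ?l" "W \<notin> m0" using big_third[OF bg m0L(1) lPQ(1) ne] by metis
        define W' where "W' = vtx P Q W"
        have WW: "W \<noteq> W'" using vtx_props(4)[OF PQ W(1)] W'_def by auto
        have W'b: "W' = vtx X0 X0' W" using a[OF W(1)] b[OF W(2)] W'_def by auto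
        have lW: "ln W W' = pl W ?l" using vtx_props(6)[OF PQ W(1)] W'_def by auto
        have c: "trl P Q Y = vtx W W' Y" if Y: "Y \<notin> ln W W'" for Y
        proof (cases "Y \<in> ?l")
          case False then show ?thesis using a ltrans[OF PQ W(1) False] Y W'_def by auto
        next
          case True
          have "vtx W W' Y = vtx X0 X0' Y"
            using ltrans[OF XX _ Yl[OF True]] W(2) Y W'b m0_def by auto
          then show ?thesis using tin[OF True] by auto
        qed
        have djW: "ln W W' \<inter> ?l = {}" using lW pl_disj lPQ W by auto
        have djW2: "ln W W' \<inter> m0 = {}"
        proof -
          have "pr (ln W W') m0" using lW m0 pl_props lPQ par_trans par_sym by metis
          moreover have "W \<in> ln W W'" using ln_props WW by auto
          ultimately show ?thesis using W unfolding par_def by auto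
        qed
        have "R \<in> ?l \<or> S \<in> ?l" "R \<in> m0 \<or> S \<in> m0" using nl False by auto
        then have "R \<notin> ln W W'" "S \<notin> ln W W'" using djW djW2 dj by auto
        then show ?thesis using dbase[OF WW _ _ RS] c by auto
      qed
    qed
  qed
qed

end


context AP begin

lemma dilat_id: "dilat id"
  unfolding dilat_def by (auto intro: par_refl ln_props(1))

lemma dilat_comp: "dilat \<sigma> \<Longrightarrow> dilat \<rho> \<Longrightarrow> dilat (\<sigma> \<circ> \<rho>)"
  unfolding dilat_def by (metis comp_apply par_trans)

lemma dilat_D: "dilat \<sigma> \<Longrightarrow> P \<noteq> Q \<Longrightarrow> \<sigma> P \<noteq> \<sigma> Q \<and> pr (ln P Q) (ln (\<sigma> P) (\<sigma> Q))"
  unfolding dilat_def by auto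

lemma par_mem: assumes "A \<noteq> B" "pr (ln P Q) (ln A B)" shows "B \<in> pl A (ln P Q)"
proof -
  have "pl A (ln P Q) = ln A B" using par_ln[OF assms(1) par_sym[OF assms(2)]] .
  then show ?thesis using ln_props(3)[OF assms(1)] by simp
qed

lemma dilat_pl: assumes "dilat \<sigma>" "P \<noteq> Q" shows "\<sigma> Q \<in> pl (\<sigma> P) (ln P Q)"
proof -
  have "\<sigma> P \<noteq> \<sigma> Q" "pr (ln P Q) (ln (\<sigma> P) (\<sigma> Q))" using dilat_D assms by auto
  then show ?thesis using par_mem by auto
qed

lemma dilat_fix: assumes "dilat \<sigma>" "\<sigma> Oo = Oo" "Y \<noteq> Oo" shows "\<sigma> Y \<in> ln Oo Y"
proof -
  have "\<sigma> Y \<in> pl (\<sigma> Oo) (ln Oo Y)" using dilat_pl[OF assms(1), of Oo Y] assms(3) by auto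
  then show ?thesis using assms(2) pl_self[OF ln_props(1) ln_props(2)] assms(3) by auto
qed

lemma two_lines_pt: "\<not> pr l m \<Longrightarrow> l \<in> L \<Longrightarrow> m \<in> L \<Longrightarrow> X \<in> l \<Longrightarrow> X \<in> m \<Longrightarrow> Y \<in> l \<Longrightarrow> Y \<in> m \<Longrightarrow> X = Y"
  using two_pts par_refl by blast

lemma D2a: assumes s: "dilat \<sigma>" and r: "dilat \<rho>" and PQ: "P \<noteq> Q"
  and e: "\<sigma> P = \<rho> P" "\<sigma> Q = \<rho> Q" and R: "R \<notin> ln P Q"
  shows "\<sigma> R = \<rho> R"
proof -
  have PR: "P \<noteq> R" "Q \<noteq> R" using R ln_props(2,3)[OF PQ] by auto
  have lPR: "ln P R \<in> L" "ln Q R \<in> L" using ln_props(1) PR by auto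
  have QPR: "Q \<notin> ln R P"
  proof
    assume "Q \<in> ln R P"
    then have "ln R P = ln P Q" using ln_eq[of "ln R P" P Q] ln_props[of R P] PR PQ by auto
    then show False using R ln_props(2)[of R P] PR by auto
  qed
  have np: "\<not> pr (ln R P) (ln R Q)" using ln_nonpar[OF PR(1)[symmetric] QPR] .
  have np1: "\<not> pr (ln P R) (ln Q R)" using np ln_sym[of R P] ln_sym[of R Q] by simp
  have np2: "\<not> pr (pl (\<sigma> P) (ln P R)) (pl (\<sigma> Q) (ln Q R))"
    using nonpar[OF np1 par_sym[OF pl_props(3)[OF lPR(1)]] par_sym[OF pl_props(3)[OF lPR(2)]]] .
  have a: "\<sigma> R \<in> pl (\<sigma> P) (ln P R)" "\<sigma> R \<in> pl (\<sigma> Q) (ln Q R)" using dilat_pl s PR by auto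
  have b: "\<rho> R \<in> pl (\<sigma> P) (ln P R)" "\<rho> R \<in> pl (\<sigma> Q) (ln Q R)" using dilat_pl r PR e by auto
  show ?thesis using two_lines_pt[OF np2 pl_props(1)[OF lPR(1)] pl_props(1)[OF lPR(2)] a b] .
qed

lemma D2: assumes s: "dilat \<sigma>" and r: "dilat \<rho>" and PQ: "P \<noteq> Q"
  and e: "\<sigma> P = \<rho> P" "\<sigma> Q = \<rho> Q"
  shows "\<sigma> = \<rho>"
proof
  fix R
  have lPQ: "ln P Q \<in> L" using ln_props PQ by auto
  obtain X where X: "X \<notin> ln P Q" using off_line lPQ by auto
  have PX: "P \<noteq> X" using X ln_props(2)[OF PQ] by auto
  have eX: "\<sigma> X = \<rho> X" using D2a[OF s r PQ e X] .
  show "\<sigma> R = \<rho> R"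
  proof (cases "R \<in> ln P Q")
    case False then show ?thesis using D2a[OF s r PQ e] by auto
  next
    case True
    show ?thesis
    proof (cases "R = P")
      case True then show ?thesis using e by auto
    next
      case False
      have "R \<notin> ln P X"
      proof
        assume "R \<in> ln P X"
        then have "ln P X = ln P Q" using ln_eq[of "ln P X" P R] ln_eq[of "ln P Q" P R] ln_props[OF PX] ln_props[OF PQ] True False by auto
        then show False using X ln_props(3)[OF PX] by auto
      qed
      then show ?thesis using D2a[OF s r PX e(1) eX] by auto
    qed
  qed
qed

lemma trace_line: assumes s: "dilat \<sigma>" and PP: "P \<noteq> \<sigma> P" and Q: "Q \<in> ln P (\<sigma> P)"
  shows "\<sigma> Q \<in> ln P (\<sigma> P)"
proof (cases "Q = P")
  case True then show ?thesis using ln_props(3)[OF PP] by auto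
next
  case False
  have "\<sigma> Q \<in> pl (\<sigma> P) (ln P Q)" using dilat_pl s False by auto
  moreover have "ln P Q = ln P (\<sigma> P)" using ln_eq[OF ln_props(1)[OF PP] ln_props(2)[OF PP] Q] False by auto
  ultimately show ?thesis using pl_self[OF ln_props(1)[OF PP] ln_props(3)[OF PP]] by auto
qed

lemma D3: assumes s: "dilat \<sigma>" and fp: "\<And>Y. \<sigma> Y \<noteq> Y"
  shows "pr (ln P (\<sigma> P)) (ln Q (\<sigma> Q))"
proof -
  have PP: "P \<noteq> \<sigma> P" "Q \<noteq> \<sigma> Q" using fp by metis+
  note l1 = ln_props[OF PP(1)] and l2 = ln_props[OF PP(2)]
  show ?thesis
  proof (cases "Q \<in> ln P (\<sigma> P)")
    case True
    then have "\<sigma> Q \<in> ln P (\<sigma> P)" using trace_line s PP by auto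
    then have "ln Q (\<sigma> Q) = ln P (\<sigma> P)" using ln_eq[OF l1(1) True _ PP(2)] by auto
    then show ?thesis using par_refl[OF l1(1)] by auto
  next
    case False
    show ?thesis
    proof (rule ccontr)
      assume np: "\<not> pr (ln P (\<sigma> P)) (ln Q (\<sigma> Q))"
      then obtain Oo where Oo: "Oo \<in> ln P (\<sigma> P)" "Oo \<in> ln Q (\<sigma> Q)"
        unfolding par_def using l1(1) l2(1) by auto
      have "\<sigma> Oo \<in> ln P (\<sigma> P)" "\<sigma> Oo \<in> ln Q (\<sigma> Q)" using trace_line s PP Oo by auto
      then have "\<sigma> Oo = Oo" using two_lines_pt[OF np l1(1) l2(1)] Oo by auto
      then show False using fp by auto
    qed
  qed
qed

end

context DAP begin

lemma transl_pt: assumes t: "transl \<sigma>" and PP: "\<sigma> P \<noteq> P" and R: "R \<notin> ln P (\<sigma> P)"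
  shows "\<sigma> R = vtx P (\<sigma> P) R" "\<sigma> R \<in> pl R (ln P (\<sigma> P))"
proof -
  have s: "dilat \<sigma>" and fp: "\<And>Y. \<sigma> Y \<noteq> Y" using t PP unfolding transl_def by auto
  have PP': "P \<noteq> \<sigma> P" using PP by auto
  have "pr (ln R (\<sigma> R)) (ln P (\<sigma> P))" using D3[OF s fp] .
  moreover have "R \<noteq> \<sigma> R" using fp by metis
  ultimately show T1: "\<sigma> R \<in> pl R (ln P (\<sigma> P))" using par_mem par_sym by blast
  have PR: "P \<noteq> R" using R ln_props(2)[OF PP'] by auto
  have "\<sigma> R \<in> pl (\<sigma> P) (ln P R)" using dilat_pl s PR by auto
  then show "\<sigma> R = vtx P (\<sigma> P) R" using vtx_unique[OF PP' R] T1 by auto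
qed


lemma D4: assumes s: "transl \<sigma>" and r: "transl \<rho>" and e: "\<sigma> P = \<rho> P" shows "\<sigma> = \<rho>"
proof (cases "\<sigma> P = P")
  case True
  have "\<sigma> = id" using s True unfolding transl_def by auto
  moreover have "\<rho> = id" using r True e unfolding transl_def by auto
  ultimately show ?thesis by simp
next
  case False
  have ds: "dilat \<sigma>" "dilat \<rho>" using s r unfolding transl_def by auto
  have lP: "ln P (\<sigma> P) \<in> L" using ln_props(1) False by auto
  obtain R where R: "R \<notin> ln P (\<sigma> P)" using off_line lP by auto
  have PR: "P \<noteq> R" using R ln_props(2) False by auto
  have rP: "\<rho> P \<noteq> P" using False e by auto
  have "\<sigma> R = \<rho> R" using transl_pt(1)[OF s False R] transl_pt(1)[OF r rP] R e by auto
  then show ?thesis using D2[OF ds PR e] by auto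
qed

lemma transl_trl: "big \<Longrightarrow> transl (trl P Q)"
  unfolding transl_def using trl_facts trl_id dilat_id by (cases "P = Q") auto

lemma trl_inv: assumes bg: big shows "trl Q P \<circ> trl P Q = id"
proof (cases "P = Q")
  case True then show ?thesis using trl_id by simp
next
  case False
  have d: "dilat (trl Q P \<circ> trl P Q)" using dilat_comp trl_facts(4) bg False by metis
  have lPQ: "ln P Q \<in> L" using ln_props False by auto
  obtain X where X: "X \<notin> ln P Q" using off_line lPQ by auto
  have e1: "(trl Q P \<circ> trl P Q) P = id P" using trl_facts(1) False by auto
  have X': "vtx P Q X \<notin> ln Q P" using vtx_props(3)[OF False X] ln_sym by metis
  have e2: "(trl Q P \<circ> trl P Q) X = id X"
    using trl_off[OF False X] trl_off[of Q P, OF False[symmetric] X'] vtx_back(2)[OF False X] by auto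
  have PX: "P \<noteq> X" using X ln_props(2)[OF False] by auto
  show ?thesis using D2[OF d dilat_id PX e1 e2] .
qed

lemma transl_comp: assumes bg: big and s: "transl \<sigma>" and r: "transl \<rho>" shows "transl (\<sigma> \<circ> \<rho>)"
proof -
  have d: "dilat (\<sigma> \<circ> \<rho>)" using s r dilat_comp unfolding transl_def by auto
  show ?thesis
  proof (cases "\<exists>Y. (\<sigma> \<circ> \<rho>) Y = Y")
    case False then show ?thesis using d unfolding transl_def by auto
  next
    case True
    then obtain Y where Y: "\<sigma> (\<rho> Y) = Y" by auto
    have "\<sigma> \<circ> \<rho> = id"
    proof (cases "\<rho> = id")
      case True
      then have "\<sigma> Y = Y" using Y by auto
      then have "\<sigma> = id" using s unfolding transl_def by auto
      then show ?thesis using True by auto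
    next
      case False
      have rY: "\<rho> Y \<noteq> Y" using False r unfolding transl_def by auto
      have r1: "\<rho> = trl Y (\<rho> Y)" using D4[OF r transl_trl[OF bg], of Y] trl_facts(1)[OF rY[symmetric]] by auto
      have s1: "\<sigma> = trl (\<rho> Y) Y" using D4[OF s transl_trl[OF bg], of "\<rho> Y"] trl_facts(1)[OF rY] Y by auto
      have "trl (\<rho> Y) Y \<circ> trl Y (\<rho> Y) = id" using trl_inv[OF bg] .
      then show ?thesis using r1 s1 by metis
    qed
    then show ?thesis using dilat_id unfolding transl_def by auto
  qed
qed

lemma comm_diff: assumes s: "transl \<sigma>" and r: "transl \<rho>" and sP: "\<sigma> P \<noteq> P" and rP: "\<rho> P \<noteq> P"
  and np: "\<not> pr (ln P (\<sigma> P)) (ln P (\<rho> P))"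
  shows "\<sigma> (\<rho> P) = \<rho> (\<sigma> P)"
proof -
  have ds: "dilat \<sigma>" "dilat \<rho>" using s r unfolding transl_def by auto
  have fs: "\<And>Y. \<sigma> Y \<noteq> Y" using s sP unfolding transl_def by auto
  have fr: "\<And>Y. \<rho> Y \<noteq> Y" using r rP unfolding transl_def by auto
  have l1: "ln P (\<sigma> P) \<in> L" "ln P (\<rho> P) \<in> L" using ln_props(1) sP rP by auto
  have t1: "\<sigma> (\<rho> P) \<in> pl (\<rho> P) (ln P (\<sigma> P))"
    using par_mem[OF fs[symmetric]] D3[OF ds(1) fs] by blast
  have t2: "\<rho> (\<sigma> P) \<in> pl (\<sigma> P) (ln P (\<rho> P))"
    using par_mem[OF fr[symmetric]] D3[OF ds(2) fr] by blast
  have d1: "\<sigma> (\<rho> P) \<in> pl (\<sigma> P) (ln P (\<rho> P))" using dilat_pl[OF ds(1)] rP by auto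
  have d2: "\<rho> (\<sigma> P) \<in> pl (\<rho> P) (ln P (\<sigma> P))" using dilat_pl[OF ds(2)] sP by auto
  have np2: "\<not> pr (pl (\<rho> P) (ln P (\<sigma> P))) (pl (\<sigma> P) (ln P (\<rho> P)))"
    using nonpar[OF np par_sym[OF pl_props(3)[OF l1(1)]] par_sym[OF pl_props(3)[OF l1(2)]]] .
  show ?thesis using two_lines_pt[OF np2 pl_props(1)[OF l1(1)] pl_props(1)[OF l1(2)] t1 d1 d2 t2] .
qed

lemma comm_diff2: assumes bg: big and s: "transl \<sigma>" and r: "transl \<rho>" and sP: "\<sigma> P \<noteq> P" and rP: "\<rho> P \<noteq> P"
  and np: "\<not> pr (ln P (\<sigma> P)) (ln P (\<rho> P))"
  shows "\<sigma> \<circ> \<rho> = \<rho> \<circ> \<sigma>"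
  using D4[OF transl_comp[OF bg s r] transl_comp[OF bg r s], of P] comm_diff[OF s r sP rP np] by simp

lemma transl_comm: assumes bg: big and s: "transl \<sigma>" and r: "transl \<rho>" shows "\<sigma> \<circ> \<rho> = \<rho> \<circ> \<sigma>"
proof (cases "\<sigma> = id \<or> \<rho> = id")
  case True then show ?thesis by auto
next
  case False
  obtain P :: 'a where True by auto
  have sP: "\<sigma> P \<noteq> P" and rP: "\<rho> P \<noteq> P" using s r False unfolding transl_def by auto
  show ?thesis
  proof (cases "pr (ln P (\<sigma> P)) (ln P (\<rho> P))")
    case False then show ?thesis using comm_diff2[OF bg s r sP rP] by auto
  next
    case True
    note l1 = ln_props[OF sP[symmetric]] and l2 = ln_props[OF rP[symmetric]]
    have eq: "ln P (\<rho> P) = ln P (\<sigma> P)" using par_int[OF True l1(2) l2(2)] by simp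
    obtain X where X: "X \<notin> ln P (\<sigma> P)" using off_line l1(1) by auto
    have PX: "P \<noteq> X" using X l1 by auto
    define \<kappa> where "\<kappa> = trl P X"
    define \<kappa>' where "\<kappa>' = trl X P"
    have k: "transl \<kappa>" "\<kappa> P = X" using transl_trl[OF bg] trl_facts(1) PX \<kappa>_def by auto
    have kk: "\<kappa> \<circ> \<kappa>' = id" using trl_inv[OF bg] \<kappa>_def \<kappa>'_def by auto
    have kP: "\<kappa> P \<noteq> P" using k PX by auto
    have npk0: "\<not> pr (ln P X) (ln P (\<sigma> P))"
    proof
      assume "pr (ln P X) (ln P (\<sigma> P))"
      then have "ln P X = ln P (\<sigma> P)" using par_int ln_props(2)[OF PX] l1(2) by blast
      then show False using X ln_props(3)[OF PX] by simp
    qed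
    have npk: "\<not> pr (ln P (\<sigma> P)) (ln P (\<kappa> P))" using npk0 k(2) par_sym by blast
    have c1: "\<sigma> \<circ> \<kappa> = \<kappa> \<circ> \<sigma>" using comm_diff2[OF bg s k(1) sP kP npk] .
    have c2: "\<rho> \<circ> \<kappa> = \<kappa> \<circ> \<rho>" using comm_diff2[OF bg r k(1) rP kP] npk eq by simp
    have rk: "transl (\<rho> \<circ> \<kappa>)" using transl_comp[OF bg r k(1)] .
    have dr: "dilat \<rho>" and fr: "\<And>Y. \<rho> Y \<noteq> Y" using r rP unfolding transl_def by auto
    have rX: "\<rho> X \<in> pl X (ln P (\<sigma> P))"
      using par_mem[OF fr[symmetric]] D3[OF dr fr, of P X] eq by (metis par_sym)
    have dj: "pl X (ln P (\<sigma> P)) \<inter> ln P (\<sigma> P) = {}" using pl_disj l1(1) X by auto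
    have rkP: "(\<rho> \<circ> \<kappa>) P \<noteq> P" using rX dj k(2) l1(2) by auto
    have nprk: "\<not> pr (ln P (\<sigma> P)) (ln P ((\<rho> \<circ> \<kappa>) P))"
    proof
      assume a: "pr (ln P (\<sigma> P)) (ln P ((\<rho> \<circ> \<kappa>) P))"
      have "ln P (\<sigma> P) = ln P ((\<rho> \<circ> \<kappa>) P)" using par_int[OF a l1(2) ln_props(2)[OF rkP[symmetric]]] .
      then have "\<rho> X \<in> ln P (\<sigma> P)" using ln_props(3)[OF rkP[symmetric]] k(2) by simp
      then show False using rX dj by auto
    qed
    have c3: "\<sigma> \<circ> (\<rho> \<circ> \<kappa>) = (\<rho> \<circ> \<kappa>) \<circ> \<sigma>" using comm_diff2[OF bg s rk sP rkP nprk] .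
    have "\<sigma> \<circ> \<rho> = \<sigma> \<circ> \<rho> \<circ> (\<kappa> \<circ> \<kappa>')" using kk by simp
    also have "\<dots> = (\<sigma> \<circ> (\<rho> \<circ> \<kappa>)) \<circ> \<kappa>'" by (simp add: comp_assoc)
    also have "\<dots> = \<rho> \<circ> (\<kappa> \<circ> \<sigma>) \<circ> \<kappa>'" using c3 by (simp add: comp_assoc)
    also have "\<dots> = \<rho> \<circ> (\<sigma> \<circ> \<kappa>) \<circ> \<kappa>'" using c1 by simp
    also have "\<dots> = \<rho> \<circ> \<sigma> \<circ> (\<kappa> \<circ> \<kappa>')" by (simp add: comp_assoc)
    finally show ?thesis using kk by simp
  qed
qed

end


context DAP begin

definition dv where "dv Oo U A R = meet (ln Oo R) (pl A (ln U R))"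

lemma dv_props:
  assumes OU: "Oo \<noteq> U" and A: "A \<in> ln Oo U" "A \<noteq> Oo" and R: "R \<notin> ln Oo U"
  shows "dv Oo U A R \<in> ln Oo R" "dv Oo U A R \<in> pl A (ln U R)" "dv Oo U A R \<noteq> Oo"
    "dv Oo U A R \<notin> ln Oo U" "A \<noteq> U \<Longrightarrow> dv Oo U A R \<noteq> R"
proof -
  let ?l = "ln Oo U" and ?T = "dv Oo U A R"
  note lO = ln_props[OF OU]
  have RO: "R \<noteq> Oo" "R \<noteq> U" using R lO by auto
  note lOR = ln_props[OF RO(1)[symmetric]] and lUR = ln_props[OF RO(2)[symmetric]]
  have UOR: "U \<notin> ln R Oo"
  proof
    assume "U \<in> ln R Oo"
    then have "ln R Oo = ?l" using ln_eq[OF _ _ _ OU] ln_props[OF RO(1)] by auto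
    then show False using R ln_props(2)[OF RO(1)] by auto
  qed
  have np0: "\<not> pr (ln R Oo) (ln R U)" using ln_nonpar[OF RO(1) UOR] .
  have np1: "\<not> pr (ln Oo R) (ln U R)" using np0 ln_sym[of R Oo] ln_sym[of R U] by simp
  have p1: "pl A (ln U R) \<in> L" "A \<in> pl A (ln U R)" "pr (pl A (ln U R)) (ln U R)" using pl_props lUR(1) by auto
  have np2: "\<not> pr (ln Oo R) (pl A (ln U R))" using nonpar[OF np1 par_refl[OF lOR(1)] par_sym[OF p1(3)]] .
  show T1: "?T \<in> ln Oo R" "?T \<in> pl A (ln U R)" unfolding dv_def using meet_props[OF lOR(1) p1(1) np2] by auto
  show T3: "?T \<noteq> Oo"
  proof
    assume "?T = Oo"
    then have "Oo \<in> pl A (ln U R)" using T1 by auto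
    then have "pl A (ln U R) = ln Oo A" using ln_eq[OF p1(1) _ p1(2)] A(2) by auto
    also have "\<dots> = ?l" using ln_eq[OF lO(1) lO(2) A(1) A(2)[symmetric]] .
    finally have "pr ?l (ln U R)" using p1(3) by simp
    then have "?l = ln U R" using par_int lO(3) lUR(2) by blast
    then show False using R lUR(3) by simp
  qed
  show T4: "?T \<notin> ?l"
  proof
    assume "?T \<in> ?l"
    then have "ln Oo R = ?l" using two_pts[OF lOR(1) lO(1) lOR(2) lO(2) T1(1)] T3 by auto
    then show False using R lOR(3) by simp
  qed
  assume AU: "A \<noteq> U"
  show "?T \<noteq> R"
  proof
    assume "?T = R"
    then have "pl A (ln U R) = ln U R" using par_int[OF p1(3)] T1(2) lUR(3) by auto
    then have "A \<in> ln U R" using p1(2) by simp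
    then have "ln U R = ?l" using two_pts[OF lUR(1) lO(1) lUR(2) lO(3) _ A(1) AU[symmetric]] by auto
    then show False using R lUR(3) by simp
  qed
qed

lemma dv_unique:
  assumes OU: "Oo \<noteq> U" and A: "A \<in> ln Oo U" "A \<noteq> Oo" and R: "R \<notin> ln Oo U"
    and T: "T \<in> ln Oo R" "T \<in> pl A (ln U R)"
  shows "dv Oo U A R = T"
proof -
  have RO: "R \<noteq> Oo" "R \<noteq> U" using R ln_props[OF OU] by auto
  note lOR = ln_props[OF RO(1)[symmetric]] and lUR = ln_props[OF RO(2)[symmetric]]
  have "ln Oo R \<noteq> pl A (ln U R)"
  proof
    assume e: "ln Oo R = pl A (ln U R)"
    have "dv Oo U A R \<in> ln Oo R" "dv Oo U A R \<in> pl A (ln U R)" "dv Oo U A R \<notin> ln Oo U"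
      using dv_props[OF OU A R] by auto
    have "pr (ln Oo R) (ln U R)" using e pl_props(3)[OF lUR(1)] by simp
    then have "ln Oo R = ln U R" using par_int lOR(3) lUR(3) by blast
    then have "U \<in> ln Oo R" using lUR(2) by simp
    then have "ln Oo R = ln Oo U" using ln_eq[OF lOR(1) lOR(2) _ OU] by auto
    then show False using R lOR(3) by simp
  qed
  then show ?thesis unfolding dv_def using meet_eq[OF lOR(1) pl_props(1)[OF lUR(1)]] T by auto
qed

lemma cstep:
  assumes OU: "Oo \<noteq> U" and A: "A \<in> ln Oo U" "A \<noteq> Oo" and AU: "A \<noteq> U"
    and R: "R \<notin> ln Oo U" and S: "S \<notin> ln Oo U" and RS: "S \<notin> ln Oo R"
  shows "pr (ln R S) (ln (dv Oo U A R) (dv Oo U A S))"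
proof -
  let ?R' = "dv Oo U A R" and ?S' = "dv Oo U A S" and ?l = "ln Oo U"
  note VR = dv_props[OF OU A R] and VS = dv_props[OF OU A S]
  note lO = ln_props[OF OU]
  have RO: "R \<noteq> Oo" "R \<noteq> U" "S \<noteq> Oo" "S \<noteq> U" using R S lO by auto
  note lOR = ln_props[OF RO(1)[symmetric]] and lOS = ln_props[OF RO(3)[symmetric]]
  have RS': "R \<noteq> S" using RS lOR by auto
  have RR: "R \<noteq> ?R'" "S \<noteq> ?S'" using VR(5)[OF AU] VS(5)[OF AU] by auto
  have eR: "ln R ?R' = ln Oo R" using ln_eq[OF lOR(1) lOR(3) VR(1) RR(1)] .
  have eS: "ln S ?S' = ln Oo S" using ln_eq[OF lOS(1) lOS(3) VS(1) RR(2)] .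
  have eUA: "ln U A = ?l" using ln_eq[OF lO(1) lO(3) A(1) AU[symmetric]] .
  have d1: "ln Oo R \<noteq> ?l" using R lOR(3) by auto
  have d2: "ln Oo S \<noteq> ?l" using S lOS(3) by auto
  have d3: "ln Oo R \<noteq> ln Oo S" using RS lOS(3) by auto
  have R'S': "?R' \<noteq> ?S'"
  proof
    assume e: "?R' = ?S'"
    have a: "?R' \<in> ln Oo R" "?R' \<in> ln Oo S" using VR VS e by auto
    have "ln Oo R = ln Oo S" using two_pts[OF lOR(1) lOS(1) lOR(2) lOS(2) a VR(3)[symmetric]] .
    then show False using d3 by simp
  qed
  have R'A: "?R' \<noteq> A" "A \<noteq> ?S'" using VR(4) VS(4) A by auto
  have lUR: "ln U R \<in> L" "ln U S \<in> L" using ln_props RO by auto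
  have eAR: "ln ?R' A = pl A (ln U R)" using ln_eq[OF pl_props(1)[OF lUR(1)] VR(2) pl_props(2)[OF lUR(1)] R'A(1)] .
  have eAS: "ln A ?S' = pl A (ln U S)" using ln_eq[OF pl_props(1)[OF lUR(2)] pl_props(2)[OF lUR(2)] VS(2) R'A(2)] .
  have p1: "pr (ln R U) (ln ?R' A)" using eAR pl_props(3)[OF lUR(1)] ln_sym[of R U] par_sym by metis
  have p2: "pr (ln U S) (ln A ?S')" using eAS pl_props(3)[OF lUR(2)] par_sym by metis
  have n1: "ln R U \<noteq> ln ?R' A"
  proof
    assume "ln R U = ln ?R' A"
    then have "A \<in> ln R U" using ln_props(3)[OF R'A(1)] by simp
    then have "ln R U = ?l" using two_pts[OF ln_props(1)[OF RO(2)] lO(1) ln_props(3)[OF RO(2)] lO(3) _ A(1) AU[symmetric]] by auto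
    then show False using R ln_props(2)[OF RO(2)] by simp
  qed
  have n2: "ln U S \<noteq> ln A ?S'"
  proof
    assume "ln U S = ln A ?S'"
    then have "A \<in> ln U S" using ln_props(2)[OF R'A(2)] by simp
    then have "ln U S = ?l" using two_pts[OF ln_props(1)[OF RO(4)[symmetric]] lO(1) ln_props(2)[OF RO(4)[symmetric]] lO(3) _ A(1) AU[symmetric]] by auto
    then show False using S ln_props(3)[OF RO(4)[symmetric]] by simp
  qed
  have conc: "\<exists>P. P \<in> ln R ?R' \<and> P \<in> ln U A \<and> P \<in> ln S ?S'" using eR eS eUA lOR(2) lOS(2) lO(2) by auto
  show ?thesis
    apply (rule desarg[of R ?R' U A S ?S'])
    using RR AU RO RS' R'S' R'A eR eS eUA d1 d2 d3 conc p1 p2 n1 n2 by auto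
qed

lemma ctrans:
  assumes OU: "Oo \<noteq> U" and A: "A \<in> ln Oo U" "A \<noteq> Oo" and AU: "A \<noteq> U"
    and X: "X \<notin> ln Oo U" and S: "S \<notin> ln Oo U" and SX: "S \<notin> ln Oo X"
  shows "dv Oo X (dv Oo U A X) S = dv Oo U A S"
proof -
  let ?X' = "dv Oo U A X" and ?S' = "dv Oo U A S"
  note VX = dv_props[OF OU A X] and VS = dv_props[OF OU A S]
  have XO: "Oo \<noteq> X" using X ln_props(2)[OF OU] by auto
  have st: "pr (ln X S) (ln ?X' ?S')" using cstep[OF OU A AU X S SX] .
  have X'S': "?X' \<noteq> ?S'"
  proof
    assume e: "?X' = ?S'"
    have a: "?X' \<in> ln Oo X" "?X' \<in> ln Oo S" using VX VS e by auto
    have SO: "Oo \<noteq> S" using S ln_props(2)[OF OU] by auto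
    have "ln Oo X = ln Oo S" using two_pts[OF ln_props(1)[OF XO] ln_props(1)[OF SO] ln_props(2)[OF XO] ln_props(2)[OF SO] a VX(3)[symmetric]] .
    then show False using SX ln_props(3)[OF SO] by simp
  qed
  have "?S' \<in> pl ?X' (ln X S)" using par_mem[OF X'S' st] .
  then show ?thesis using dv_unique[OF XO VX(1) VX(3) SX] VS(1) by auto
qed

end


context DAP begin

lemma cbase:
  assumes OB: "Oo \<noteq> B" and B': "B' \<in> ln Oo B" "B' \<noteq> Oo" "B' \<noteq> B"
    and R: "R \<notin> ln Oo B" and S: "S \<notin> ln Oo B" and RS: "R \<noteq> S"
  shows "dv Oo B B' R \<noteq> dv Oo B B' S \<and> pr (ln R S) (ln (dv Oo B B' R) (dv Oo B B' S))"
proof (cases "S \<in> ln Oo R")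
  case False
  have "pr (ln R S) (ln (dv Oo B B' R) (dv Oo B B' S))" using cstep[OF OB B' R S False] .
  moreover have "dv Oo B B' R \<noteq> dv Oo B B' S"
  proof
    assume e: "dv Oo B B' R = dv Oo B B' S"
    have RO: "Oo \<noteq> R" "Oo \<noteq> S" using R S ln_props(2)[OF OB] by auto
    have a: "dv Oo B B' R \<in> ln Oo R" "dv Oo B B' R \<in> ln Oo S"
      using dv_props(1)[OF OB B'(1,2) R] dv_props(1)[OF OB B'(1,2) S] e by auto
    have "ln Oo R = ln Oo S" using two_pts[OF ln_props(1)[OF RO(1)] ln_props(1)[OF RO(2)] ln_props(2)[OF RO(1)] ln_props(2)[OF RO(2)] a]
      dv_props(3)[OF OB B'(1,2) R] by auto
    then show False using False ln_props(3)[OF RO(2)] by simp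
  qed
  ultimately show ?thesis by auto
next
  case True
  let ?k = "ln Oo R" and ?R' = "dv Oo B B' R" and ?S' = "dv Oo B B' S"
  have RO: "Oo \<noteq> R" "Oo \<noteq> S" "B \<noteq> R" "B \<noteq> S" using R S ln_props(2,3)[OF OB] by auto
  note k = ln_props[OF RO(1)]
  have kS: "ln Oo S = ?k" using ln_eq[OF k(1) k(2) True RO(2)] .
  have R'k: "?R' \<in> ?k" using dv_props(1)[OF OB B'(1,2) R] .
  have S'k: "?S' \<in> ?k" using dv_props(1)[OF OB B'(1,2) S] kS by simp
  have Bk: "B \<notin> ?k"
  proof
    assume "B \<in> ?k"
    then have "?k = ln Oo B" using ln_eq[OF k(1) k(2) _ OB] by auto
    then show False using R k(3) by simp
  qed
  have SBR: "S \<notin> ln B R"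
  proof
    assume "S \<in> ln B R"
    then have "ln B R = ?k" using two_pts[OF ln_props(1)[OF RO(3)] k(1) ln_props(3)[OF RO(3)] k(3) _ True RS] by auto
    then show False using Bk ln_props(2)[OF RO(3)] by simp
  qed
  have np: "\<not> pr (ln B R) (ln B S)" using ln_nonpar[OF RO(3) SBR] .
  have lBR: "ln B R \<in> L" "ln B S \<in> L" using ln_props RO by auto
  have np2: "\<not> pr (pl B' (ln B R)) (pl B' (ln B S))"
    using nonpar[OF np par_sym[OF pl_props(3)[OF lBR(1)]] par_sym[OF pl_props(3)[OF lBR(2)]]] .
  have ne: "?R' \<noteq> ?S'"
  proof
    assume eq: "?R' = ?S'"
    have m1: "?R' \<in> pl B' (ln B R)" using dv_props(2)[OF OB B'(1,2) R] .
    have m2: "?R' \<in> pl B' (ln B S)" using dv_props(2)[OF OB B'(1,2) S] eq by auto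
    have "?R' = B'" using two_lines_pt[OF np2 pl_props(1)[OF lBR(1)] pl_props(1)[OF lBR(2)] m1 m2 pl_props(2)[OF lBR(1)] pl_props(2)[OF lBR(2)]] .
    then have "B' \<in> ?k" using R'k by simp
    then have "?k = ln Oo B" using two_pts[OF k(1) ln_props(1)[OF OB] k(2) ln_props(2)[OF OB] _ B'(1) B'(2)[symmetric]] by auto
    then show False using R k(3) by simp
  qed
  have e1: "ln R S = ?k" using ln_eq[OF k(1) k(3) True RS] .
  have e2: "ln ?R' ?S' = ?k" using ln_eq[OF k(1) R'k S'k ne] .
  show ?thesis using ne e1 e2 par_refl[OF k(1)] by auto
qed

definition cdil where
  "cdil Oo U A = (\<lambda>R. if A = U then R else if R = Oo then Oo else if R \<notin> ln Oo U then dv Oo U A R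
     else dv Oo (SOME X. X \<notin> ln Oo U) (dv Oo U A (SOME X. X \<notin> ln Oo U)) R)"

lemma cdil_main:
  assumes OU: "Oo \<noteq> U" and A: "A \<in> ln Oo U" "A \<noteq> Oo" and AU: "A \<noteq> U"
  shows "cdil Oo U A Oo = Oo" "cdil Oo U A U = A" "\<And>Y. Y \<noteq> Oo \<Longrightarrow> cdil Oo U A Y \<in> ln Oo Y"
    "big \<Longrightarrow> dilat (cdil Oo U A)"
proof -
  let ?l = "ln Oo U" and ?d = "cdil Oo U A"
  note lO = ln_props[OF OU]
  define X0 where "X0 = (SOME X. X \<notin> ?l)"
  have X0: "X0 \<notin> ?l" unfolding X0_def using off_line[OF lO(1)] by (metis someI_ex)
  define X0' where "X0' = dv Oo U A X0"
  note VX = dv_props[OF OU A X0, folded X0'_def]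
  have XO: "Oo \<noteq> X0" using X0 lO by auto
  have XX: "X0' \<noteq> X0" using VX(5)[OF AU] .
  define m0 where "m0 = ln Oo X0"
  note m0 = ln_props[OF XO, folded m0_def]
  have lm0: "Y = Oo" if "Y \<in> ?l" "Y \<in> m0" for Y
  proof (rule ccontr)
    assume "Y \<noteq> Oo"
    then have "m0 = ?l" using two_pts[OF m0(1) lO(1) m0(2) lO(2) that(2) that(1)] by auto
    then show False using X0 m0(3) by simp
  qed
  have tin: "?d Y = dv Oo X0 X0' Y" if "Y \<in> ?l" "Y \<noteq> Oo" for Y
    using that AU unfolding cdil_def X0_def X0'_def by auto
  have a: "?d Y = dv Oo U A Y" if "Y \<notin> ?l" for Y
    using that AU lO(2) unfolding cdil_def by auto
  have b: "?d Y = dv Oo X0 X0' Y" if "Y \<notin> m0" "Y \<noteq> Oo" for Y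
  proof (cases "Y \<in> ?l")
    case True then show ?thesis using tin that by auto
  next
    case False
    then show ?thesis using a ctrans[OF OU A AU X0 False] that m0_def X0'_def by auto
  qed
  have Yl: "Y \<notin> m0" if "Y \<in> ?l" "Y \<noteq> Oo" for Y using lm0 that by auto
  show c0: "?d Oo = Oo" unfolding cdil_def by auto
  show "?d U = A"
  proof -
    have UO: "U \<notin> ln Oo X0" using Yl[OF lO(3) OU[symmetric]] m0_def by simp
    have AX: "A \<noteq> X0'" using VX(4) A(1) by auto
    have UX: "U \<noteq> X0" using X0 lO(3) by auto
    have lUX: "ln U X0 \<in> L" using ln_props(1)[OF UX] .
    have eA: "ln A X0' = pl A (ln U X0)" using ln_eq[OF pl_props(1)[OF lUX] pl_props(2)[OF lUX] VX(2) AX] .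
    have "pr (ln X0' A) (ln X0 U)" using eA pl_props(3)[OF lUX] ln_sym[of A X0'] ln_sym[of U X0] by simp
    then have "A \<in> pl X0' (ln X0 U)" using par_mem[OF AX[symmetric]] par_sym by blast
    then have "dv Oo X0 X0' U = A" using dv_unique[OF XO VX(1) VX(3) UO] A(1) by auto
    then show ?thesis using tin[OF lO(3) OU[symmetric]] by simp
  qed
  show cline: "?d Y \<in> ln Oo Y" if "Y \<noteq> Oo" for Y
  proof (cases "Y \<in> ?l")
    case True
    have "Y \<notin> ln Oo X0" using Yl[OF True that] m0_def by simp
    then show ?thesis using tin[OF True that] dv_props(1)[OF XO VX(1) VX(3)] by auto
  next
    case False then show ?thesis using a dv_props(1)[OF OU A] by auto
  qed
  have cne: "?d Y \<noteq> Oo" if "Y \<noteq> Oo" for Y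
  proof (cases "Y \<in> ?l")
    case True
    have "Y \<notin> ln Oo X0" using Yl[OF True that] m0_def by simp
    then show ?thesis using tin[OF True that] dv_props(3)[OF XO VX(1) VX(3)] by auto
  next
    case False then show ?thesis using a dv_props(3)[OF OU A] by auto
  qed
  assume bg: big
  show "dilat ?d"
    unfolding dilat_def
  proof (intro allI impI)
    fix R S :: 'a assume RS: "R \<noteq> S"
    show "?d R \<noteq> ?d S \<and> pr (ln R S) (ln (?d R) (?d S))"
    proof (cases "R = Oo \<or> S = Oo")
      case True
      show ?thesis
      proof (cases "R = Oo")
        case True
        have SO: "S \<noteq> Oo" using RS True by auto
        have "?d S \<noteq> Oo" using cne SO by auto
        moreover have "ln Oo (?d S) = ln Oo S"
          using ln_eq[OF ln_props(1)[OF SO[symmetric]] ln_props(2)[OF SO[symmetric]] cline[OF SO]] cne[OF SO] by auto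
        ultimately show ?thesis using True c0 par_refl ln_props(1)[OF SO[symmetric]] by auto
      next
        case False
        then have SO: "S = Oo" "R \<noteq> Oo" using \<open>R = Oo \<or> S = Oo\<close> by auto
        have "?d R \<noteq> Oo" using cne SO by auto
        moreover have "ln Oo (?d R) = ln Oo R"
          using ln_eq[OF ln_props(1)[OF SO(2)[symmetric]] ln_props(2)[OF SO(2)[symmetric]] cline[OF SO(2)]] cne[OF SO(2)] by auto
        ultimately show ?thesis using SO c0 par_refl ln_props(1)[OF SO(2)[symmetric]] ln_sym by metis
      qed
    next
      case nO: False
      show ?thesis
      proof (cases "R \<notin> ?l \<and> S \<notin> ?l")
        case True then show ?thesis using cbase[OF OU A AU _ _ RS] a by auto
      next
        case nl: False
        show ?thesis
        proof (cases "R \<notin> m0 \<and> S \<notin> m0")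
          case True then show ?thesis using cbase[OF XO VX(1) VX(3) XX _ _ RS] b m0_def nO by auto
        next
          case False
          have ne: "m0 \<noteq> ?l" using m0 X0 by auto
          obtain W where W: "W \<notin> ?l" "W \<notin> m0" using big_third[OF bg m0(1) lO(1) ne] by metis
          have WO: "Oo \<noteq> W" using W lO by auto
          define W' where "W' = dv Oo U A W"
          note VW = dv_props[OF OU A W(1), folded W'_def]
          have WW: "W' \<noteq> W" using VW(5)[OF AU] .
          have W'b: "W' = dv Oo X0 X0' W" using a[OF W(1)] b[OF W(2) WO[symmetric]] W'_def by auto
          define mW where "mW = ln Oo W"
          note mW = ln_props[OF WO, folded mW_def]
          have c: "?d Y = dv Oo W W' Y" if Y: "Y \<notin> mW" "Y \<noteq> Oo" for Y
          proof (cases "Y \<in> ?l")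
            case False then show ?thesis using a ctrans[OF OU A AU W(1) False] Y W'_def mW_def by auto
          next
            case True
            have Ym: "Y \<notin> ln Oo X0" using Yl[OF True Y(2)] m0_def by simp
            have Wm: "W \<notin> ln Oo X0" using W(2) m0_def by simp
            have "dv Oo W W' Y = dv Oo X0 X0' Y"
              using ctrans[OF XO VX(1) VX(3) XX Wm Ym] Y(1) W'b mW_def by auto
            then show ?thesis using tin[OF True Y(2)] by auto
          qed
          have lmW: "Y = Oo" if "Y \<in> mW" "Y \<in> ?l \<or> Y \<in> m0" for Y
          proof (rule ccontr)
            assume YO: "Y \<noteq> Oo"
            show False
            proof (cases "Y \<in> ?l")
              case True
              then have "mW = ?l" using two_pts[OF mW(1) lO(1) mW(2) lO(2) that(1) True] YO by auto
              then show False using W mW(3) by simp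
            next
              case False
              then have "Y \<in> m0" using that by auto
              then have "mW = m0" using two_pts[OF mW(1) m0(1) mW(2) m0(2) that(1)] YO by auto
              then show False using W mW(3) by simp
            qed
          qed
          have "R \<in> ?l \<or> S \<in> ?l" "R \<in> m0 \<or> S \<in> m0" using nl False by auto
          then have RSW: "R \<notin> mW" "S \<notin> mW" using lmW nO Yl by metis+
          have "?d R = dv Oo W W' R" "?d S = dv Oo W W' S" using c RSW nO by auto
          then show ?thesis using cbase[OF WO VW(1) VW(3) WW RSW[unfolded mW_def] RS] by auto
        qed
      qed
    qed
  qed
qed

lemma cdil_facts:
  assumes OU: "Oo \<noteq> U" and A: "A \<in> ln Oo U" "A \<noteq> Oo"
  shows "cdil Oo U A Oo = Oo" "cdil Oo U A U = A" "\<And>Y. Y \<noteq> Oo \<Longrightarrow> cdil Oo U A Y \<in> ln Oo Y"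
    "big \<Longrightarrow> dilat (cdil Oo U A)"
proof -
  show "cdil Oo U A Oo = Oo" unfolding cdil_def by auto
  show "cdil Oo U A U = A" using cdil_main(2)[OF OU A] unfolding cdil_def by (cases "A = U") auto
  show "cdil Oo U A Y \<in> ln Oo Y" if "Y \<noteq> Oo" for Y
    using cdil_main(3)[OF OU A _ that] ln_props(3)[OF that[symmetric]] unfolding cdil_def by (cases "A = U") auto
  show "dilat (cdil Oo U A)" if "big"
  proof (cases "A = U")
    case True then have "cdil Oo U A = id" unfolding cdil_def by auto
    then show ?thesis using dilat_id by simp
  next
    case False then show ?thesis using cdil_main(4)[OF OU A False that] by simp
  qed
qed

end


context AP begin

definition aux where "aux Z U = (SOME X. X \<notin> ln Z U)"

lemma aux_prop: "Z \<noteq> U \<Longrightarrow> aux Z U \<notin> ln Z U"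
  unfolding aux_def using off_line[OF ln_props(1)] by (metis someI_ex)

lemma sf_add_eq: "sf_add L Z U A B = meet (ln Z U) (pl (meet (pl (aux Z U) (ln Z U)) (pl A (ln Z (aux Z U)))) (ln B (aux Z U)))"
  unfolding sf_add_def aux_def Let_def by simp

lemma sf_mul_eq: "sf_mul L Z U A B = meet (ln Z U) (pl (meet (pl A (ln U (aux Z U))) (ln Z (aux Z U))) (ln B (aux Z U)))"
  unfolding sf_mul_def aux_def Let_def by simp

lemma offl_basics:
  assumes ZU: "Z \<noteq> U" and X: "X \<notin> ln Z U" and B: "B \<in> ln Z U"
  shows "B \<noteq> X" "ln B X \<in> L" "\<not> pr (ln Z U) (ln B X)"
proof -
  note l = ln_props[OF ZU]
  show BX: "B \<noteq> X" using B X by auto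
  show "ln B X \<in> L" using ln_props(1)[OF BX] .
  show "\<not> pr (ln Z U) (ln B X)"
  proof
    assume "pr (ln Z U) (ln B X)"
    then have "ln Z U = ln B X" using par_int B ln_props(2)[OF BX] by blast
    then show False using X ln_props(3)[OF BX] by simp
  qed
qed

lemma addP:
  assumes ZU: "Z \<noteq> U" and X: "X \<notin> ln Z U" and A: "A \<in> ln Z U"
  shows "meet (pl X (ln Z U)) (pl A (ln Z X)) \<in> pl X (ln Z U)"
        "meet (pl X (ln Z U)) (pl A (ln Z X)) \<in> pl A (ln Z X)"
        "meet (pl X (ln Z U)) (pl A (ln Z X)) \<notin> ln Z U"
proof -
  note l = ln_props[OF ZU]
  note o = offl_basics[OF ZU X l(2)]
  have np: "\<not> pr (pl X (ln Z U)) (pl A (ln Z X))"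
    using nonpar[OF o(3) par_sym[OF pl_props(3)[OF l(1)]] par_sym[OF pl_props(3)[OF o(2)]]] .
  show m: "meet (pl X (ln Z U)) (pl A (ln Z X)) \<in> pl X (ln Z U)"
      "meet (pl X (ln Z U)) (pl A (ln Z X)) \<in> pl A (ln Z X)"
    using meet_props[OF pl_props(1)[OF l(1)] pl_props(1)[OF o(2)] np] by auto
  show "meet (pl X (ln Z U)) (pl A (ln Z X)) \<notin> ln Z U" using m(1) pl_disj[OF l(1) X] by auto
qed

lemma addS:
  assumes ZU: "Z \<noteq> U" and X: "X \<notin> ln Z U" and B: "B \<in> ln Z U" and P: "P \<notin> ln Z U"
  shows "meet (ln Z U) (pl P (ln B X)) \<in> ln Z U" "meet (ln Z U) (pl P (ln B X)) \<in> pl P (ln B X)"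
proof -
  note l = ln_props[OF ZU]
  note o = offl_basics[OF ZU X B]
  have np: "\<not> pr (ln Z U) (pl P (ln B X))"
    using nonpar[OF o(3) par_refl[OF l(1)] par_sym[OF pl_props(3)[OF o(2)]]] .
  show "meet (ln Z U) (pl P (ln B X)) \<in> ln Z U" "meet (ln Z U) (pl P (ln B X)) \<in> pl P (ln B X)"
    using meet_props[OF l(1) pl_props(1)[OF o(2)] np] by auto
qed

lemma sf_add_in: assumes "Z \<noteq> U" "A \<in> ln Z U" "B \<in> ln Z U" shows "sf_add L Z U A B \<in> ln Z U"
  unfolding sf_add_eq using addS(1)[OF assms(1) aux_prop[OF assms(1)] assms(3) addP(3)[OF assms(1) aux_prop[OF assms(1)] assms(2)]] .

lemma sf_add_inj2:
  assumes ZU: "Z \<noteq> U" and A: "A \<in> ln Z U" and B: "B \<in> ln Z U" "B' \<in> ln Z U"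
    and e: "sf_add L Z U A B = sf_add L Z U A B'"
  shows "B = B'"
proof (rule ccontr)
  assume BB: "B \<noteq> B'"
  define X where "X = aux Z U"
  have X: "X \<notin> ln Z U" using aux_prop[OF ZU] X_def by simp
  define P where "P = meet (pl X (ln Z U)) (pl A (ln Z X))"
  have P: "P \<notin> ln Z U" using addP(3)[OF ZU X A] P_def by simp
  define S where "S = sf_add L Z U A B"
  have S1: "S = meet (ln Z U) (pl P (ln B X))" using sf_add_eq S_def X_def P_def by simp
  have S2: "S = meet (ln Z U) (pl P (ln B' X))" using sf_add_eq S_def X_def P_def e by simp
  note o1 = offl_basics[OF ZU X B(1)] and o2 = offl_basics[OF ZU X B(2)]
  have Sin: "S \<in> ln Z U" "S \<in> pl P (ln B X)" "S \<in> pl P (ln B' X)"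
    using addS[OF ZU X B(1) P] addS[OF ZU X B(2) P] S1 S2 by auto
  have SP: "S \<noteq> P" using Sin P by auto
  have "pl P (ln B X) = pl P (ln B' X)"
    using two_pts[OF pl_props(1)[OF o1(2)] pl_props(1)[OF o2(2)] pl_props(2)[OF o1(2)] pl_props(2)[OF o2(2)] Sin(2) Sin(3) SP[symmetric]] .
  then have "pr (ln B X) (ln B' X)" using pl_props(3)[OF o1(2), of P] pl_props(3)[OF o2(2), of P] par_trans par_sym by metis
  then have "ln B X = ln B' X" using par_int ln_props(3)[OF o1(1)] ln_props(3)[OF o2(1)] by blast
  then have "B' \<in> ln B X" using ln_props(2)[OF o2(1)] by simp
  then have "ln B X = ln Z U" using two_pts[OF ln_props(1)[OF o1(1)] ln_props(1)[OF ZU] ln_props(2)[OF o1(1)] B(1) _ B(2) BB] by auto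
  then show False using X ln_props(3)[OF o1(1)] by simp
qed

lemma sf_add_Zl: assumes ZU: "Z \<noteq> U" and B: "B \<in> ln Z U" shows "sf_add L Z U Z B = B"
proof -
  define X where "X = aux Z U"
  have X: "X \<notin> ln Z U" using aux_prop[OF ZU] X_def by simp
  note l = ln_props[OF ZU]
  have ZX: "Z \<noteq> X" using X l by auto
  note lZX = ln_props[OF ZX]
  have e1: "pl Z (ln Z X) = ln Z X" using pl_self[OF lZX(1) lZX(2)] .
  have ne: "pl X (ln Z U) \<noteq> ln Z X" using pl_disj[OF l(1) X] lZX(2) l(2) by auto
  have P: "meet (pl X (ln Z U)) (pl Z (ln Z X)) = X"
    using meet_eq[OF pl_props(1)[OF l(1)] lZX(1) ne pl_props(2)[OF l(1)] lZX(3)] e1 by simp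
  note o = offl_basics[OF ZU X B]
  have e2: "pl X (ln B X) = ln B X" using pl_self[OF o(2) ln_props(3)[OF o(1)]] .
  have ne2: "ln Z U \<noteq> ln B X" using o(3) par_refl[OF l(1)] by auto
  show ?thesis unfolding sf_add_eq X_def[symmetric] P e2
    using meet_eq[OF l(1) o(2) ne2 B ln_props(2)[OF o(1)]] .
qed

lemma sf_add_Zr: assumes ZU: "Z \<noteq> U" and A: "A \<in> ln Z U" shows "sf_add L Z U A Z = A"
proof -
  define X where "X = aux Z U"
  have X: "X \<notin> ln Z U" using aux_prop[OF ZU] X_def by simp
  note l = ln_props[OF ZU]
  note o = offl_basics[OF ZU X l(2)]
  define P where "P = meet (pl X (ln Z U)) (pl A (ln Z X))"
  have P: "P \<in> pl A (ln Z X)" using addP(2)[OF ZU X A] P_def by simp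
  have e: "pl P (ln Z X) = pl A (ln Z X)" using pl_mem[OF o(2) P] .
  have ne: "ln Z U \<noteq> pl A (ln Z X)"
  proof
    assume "ln Z U = pl A (ln Z X)"
    then have "pr (ln Z U) (ln Z X)" using pl_props(3)[OF o(2)] by simp
    then show False using o(3) by simp
  qed
  show ?thesis unfolding sf_add_eq X_def[symmetric] P_def[symmetric] e
    using meet_eq[OF l(1) pl_props(1)[OF o(2)] ne A pl_props(2)[OF o(2)]] .
qed

lemma mulP:
  assumes ZU: "Z \<noteq> U" and X: "X \<notin> ln Z U"
  shows "meet (pl A (ln U X)) (ln Z X) \<in> pl A (ln U X)" "meet (pl A (ln U X)) (ln Z X) \<in> ln Z X"
    "\<not> pr (ln U X) (ln Z X)"
proof -
  note l = ln_props[OF ZU]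
  note oZ = offl_basics[OF ZU X l(2)] and oU = offl_basics[OF ZU X l(3)]
  show np: "\<not> pr (ln U X) (ln Z X)"
  proof
    assume "pr (ln U X) (ln Z X)"
    then have "ln U X = ln Z X" using par_int ln_props(3)[OF oU(1)] ln_props(3)[OF oZ(1)] by blast
    then have "Z \<in> ln U X" using ln_props(2)[OF oZ(1)] by simp
    then have "ln U X = ln Z U" using two_pts[OF ln_props(1)[OF oU(1)] l(1) _ l(2) ln_props(2)[OF oU(1)] l(3) ZU] by auto
    then show False using X ln_props(3)[OF oU(1)] by simp
  qed
  have np2: "\<not> pr (pl A (ln U X)) (ln Z X)"
    using nonpar[OF np par_sym[OF pl_props(3)[OF oU(2)]] par_refl[OF oZ(2)]] .
  show "meet (pl A (ln U X)) (ln Z X) \<in> pl A (ln U X)" "meet (pl A (ln U X)) (ln Z X) \<in> ln Z X"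
    using meet_props[OF pl_props(1)[OF oU(2)] oZ(2) np2] by auto
qed

lemma sf_mul_in: assumes ZU: "Z \<noteq> U" and "B \<in> ln Z U" shows "sf_mul L Z U A B \<in> ln Z U"
proof -
  define X where "X = aux Z U"
  have X: "X \<notin> ln Z U" using aux_prop[OF ZU] X_def by simp
  note o = offl_basics[OF ZU X assms(2)]
  have np: "\<not> pr (ln Z U) (pl (meet (pl A (ln U X)) (ln Z X)) (ln B X))"
    using nonpar[OF o(3) par_refl[OF ln_props(1)[OF ZU]] par_sym[OF pl_props(3)[OF o(2)]]] .
  show ?thesis unfolding sf_mul_eq X_def[symmetric]
    using meet_props(1)[OF ln_props(1)[OF ZU] pl_props(1)[OF o(2)] np] .
qed

lemma sf_mul_Zl: assumes ZU: "Z \<noteq> U" and B: "B \<in> ln Z U" shows "sf_mul L Z U Z B = Z"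
proof -
  define X where "X = aux Z U"
  have X: "X \<notin> ln Z U" using aux_prop[OF ZU] X_def by simp
  note l = ln_props[OF ZU]
  note oZ = offl_basics[OF ZU X l(2)] and oU = offl_basics[OF ZU X l(3)] and oB = offl_basics[OF ZU X B]
  have np: "\<not> pr (pl Z (ln U X)) (ln Z X)" using nonpar[OF mulP(3)[OF ZU X] par_sym[OF pl_props(3)[OF oU(2)]] par_refl[OF oZ(2)]] .
  have ne: "pl Z (ln U X) \<noteq> ln Z X" using np par_refl[OF oZ(2)] by auto
  have P: "meet (pl Z (ln U X)) (ln Z X) = Z"
    using meet_eq[OF pl_props(1)[OF oU(2)] oZ(2) ne pl_props(2)[OF oU(2)] ln_props(2)[OF oZ(1)]] .
  have ne2: "ln Z U \<noteq> pl Z (ln B X)"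
  proof
    assume "ln Z U = pl Z (ln B X)"
    then have "pr (ln Z U) (ln B X)" using pl_props(3)[OF oB(2)] by simp
    then show False using oB(3) by simp
  qed
  show ?thesis unfolding sf_mul_eq X_def[symmetric] P
    using meet_eq[OF l(1) pl_props(1)[OF oB(2)] ne2 l(2) pl_props(2)[OF oB(2)]] .
qed

lemma sf_mul_Zr: assumes ZU: "Z \<noteq> U" shows "sf_mul L Z U A Z = Z"
proof -
  define X where "X = aux Z U"
  have X: "X \<notin> ln Z U" using aux_prop[OF ZU] X_def by simp
  note l = ln_props[OF ZU]
  note oZ = offl_basics[OF ZU X l(2)]
  have P: "meet (pl A (ln U X)) (ln Z X) \<in> ln Z X" using mulP(2)[OF ZU X] .
  have e: "pl (meet (pl A (ln U X)) (ln Z X)) (ln Z X) = ln Z X"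
    using pl_self[OF oZ(2) P] .
  have ne: "ln Z U \<noteq> ln Z X" using oZ(3) par_refl[OF l(1)] by auto
  show ?thesis unfolding sf_mul_eq X_def[symmetric] e
    using meet_eq[OF l(1) oZ(2) ne l(2) ln_props(2)[OF oZ(1)]] .
qed

lemma sf_mul_Ur: assumes ZU: "Z \<noteq> U" and A: "A \<in> ln Z U" shows "sf_mul L Z U A U = A"
proof -
  define X where "X = aux Z U"
  have X: "X \<notin> ln Z U" using aux_prop[OF ZU] X_def by simp
  note l = ln_props[OF ZU]
  note oU = offl_basics[OF ZU X l(3)]
  have P: "meet (pl A (ln U X)) (ln Z X) \<in> pl A (ln U X)" using mulP(1)[OF ZU X] .
  have e: "pl (meet (pl A (ln U X)) (ln Z X)) (ln U X) = pl A (ln U X)" using pl_mem[OF oU(2) P] .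
  have ne: "ln Z U \<noteq> pl A (ln U X)"
  proof
    assume "ln Z U = pl A (ln U X)"
    then have "pr (ln Z U) (ln U X)" using pl_props(3)[OF oU(2)] by simp
    then show False using oU(3) by simp
  qed
  show ?thesis unfolding sf_mul_eq X_def[symmetric] e
    using meet_eq[OF l(1) pl_props(1)[OF oU(2)] ne A pl_props(2)[OF oU(2)]] .
qed

end


context DAP begin

lemma meet_uniq2: "l \<in> L \<Longrightarrow> m \<in> L \<Longrightarrow> \<not> pr l m \<Longrightarrow> X \<in> l \<Longrightarrow> X \<in> m \<Longrightarrow> meet l m = X"
  using meet_eq par_refl by blast

lemma add_trl:
  assumes bg: big and ZU: "Z \<noteq> U" and A: "A \<in> ln Z U" and B: "B \<in> ln Z U"
  shows "sf_add L Z U A B = trl Z A B"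
proof -
  define X where "X = aux Z U"
  have X: "X \<notin> ln Z U" using aux_prop[OF ZU] X_def by simp
  note l = ln_props[OF ZU]
  note oZ = offl_basics[OF ZU X l(2)] and oB = offl_basics[OF ZU X B]
  let ?t = "trl Z A"
  have t: "transl ?t" using transl_trl[OF bg] .
  have dt: "dilat ?t" using t unfolding transl_def by auto
  have tZ: "?t Z = A" using trl_facts(1) trl_id by (cases "Z = A") auto
  have trace: "?t Y \<in> pl Y (ln Z U)" for Y
  proof (cases "Z = A")
    case True then show ?thesis using trl_id pl_props(2)[OF l(1)] by simp
  next
    case False
    have "ln Z A = ln Z U" using ln_eq[OF l(1) l(2) A False] .
    then show ?thesis using trl_facts(3)[OF False] by simp
  qed
  have tX1: "?t X \<in> pl X (ln Z U)" using trace .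
  have tX2: "?t X \<in> pl A (ln Z X)" using dilat_pl[OF dt oZ(1)] tZ by simp
  have np: "\<not> pr (pl X (ln Z U)) (pl A (ln Z X))"
    using nonpar[OF oZ(3) par_sym[OF pl_props(3)[OF l(1)]] par_sym[OF pl_props(3)[OF oZ(2)]]] .
  have P: "meet (pl X (ln Z U)) (pl A (ln Z X)) = ?t X"
    using meet_uniq2[OF pl_props(1)[OF l(1)] pl_props(1)[OF oZ(2)] np tX1 tX2] .
  have tB1: "?t B \<in> ln Z U" using trace[of B] pl_self[OF l(1) B] by simp
  have tB2: "?t B \<in> pl (?t X) (ln B X)" using dilat_pl[OF dt oB(1)[symmetric]] ln_sym[of X B] by simp
  have np2: "\<not> pr (ln Z U) (pl (?t X) (ln B X))"
    using nonpar[OF oB(3) par_refl[OF l(1)] par_sym[OF pl_props(3)[OF oB(2)]]] .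
  show ?thesis unfolding sf_add_eq X_def[symmetric] P
    using meet_uniq2[OF l(1) pl_props(1)[OF oB(2)] np2 tB1 tB2] .
qed

lemma mul_cdil:
  assumes bg: big and ZU: "Z \<noteq> U" and A: "A \<in> ln Z U" "A \<noteq> Z" and B: "B \<in> ln Z U"
  shows "sf_mul L Z U A B = cdil Z U A B"
proof -
  define X where "X = aux Z U"
  have X: "X \<notin> ln Z U" using aux_prop[OF ZU] X_def by simp
  note l = ln_props[OF ZU]
  note oZ = offl_basics[OF ZU X l(2)] and oU = offl_basics[OF ZU X l(3)] and oB = offl_basics[OF ZU X B]
  let ?d = "cdil Z U A"
  note cf = cdil_facts[OF ZU A]
  have dd: "dilat ?d" using cf(4)[OF bg] .
  have dX1: "?d X \<in> pl A (ln U X)" using dilat_pl[OF dd oU(1)] cf(2) by simp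
  have dX2: "?d X \<in> ln Z X" using cf(3)[OF oZ(1)[symmetric]] .
  have np: "\<not> pr (pl A (ln U X)) (ln Z X)"
    using nonpar[OF mulP(3)[OF ZU X] par_sym[OF pl_props(3)[OF oU(2)]] par_refl[OF oZ(2)]] .
  have P: "meet (pl A (ln U X)) (ln Z X) = ?d X"
    using meet_uniq2[OF pl_props(1)[OF oU(2)] oZ(2) np dX1 dX2] .
  have dB1: "?d B \<in> ln Z U"
  proof (cases "B = Z")
    case True then show ?thesis using cf(1) l(2) by simp
  next
    case False
    have "ln Z B = ln Z U" using ln_eq[OF l(1) l(2) B] False by auto
    then show ?thesis using cf(3)[OF False] by simp
  qed
  have dB2: "?d B \<in> pl (?d X) (ln B X)" using dilat_pl[OF dd oB(1)[symmetric]] ln_sym[of X B] by simp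
  have np2: "\<not> pr (ln Z U) (pl (?d X) (ln B X))"
    using nonpar[OF oB(3) par_refl[OF l(1)] par_sym[OF pl_props(3)[OF oB(2)]]] .
  show ?thesis unfolding sf_mul_eq X_def[symmetric] P
    using meet_uniq2[OF l(1) pl_props(1)[OF oB(2)] np2 dB1 dB2] .
qed

end


context DAP begin

definition hp where "hp l2 d Y = meet l2 (pl Y d)"

lemma hp_props: assumes l2: "l2 \<in> L" and d: "d \<in> L" "\<not> pr d l2"
  shows "hp l2 d Y \<in> l2" "hp l2 d Y \<in> pl Y d"
proof -
  have np: "\<not> pr l2 (pl Y d)" using nonpar[OF d(2) par_sym[OF pl_props(3)[OF d(1)]] par_refl[OF l2]] par_sym by blast
  show "hp l2 d Y \<in> l2" "hp l2 d Y \<in> pl Y d" unfolding hp_def using meet_props[OF l2 pl_props(1)[OF d(1)] np] by auto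
qed

lemma hp_unique: assumes l2: "l2 \<in> L" and d: "d \<in> L" "\<not> pr d l2" and W: "W \<in> l2" "W \<in> pl Y d"
  shows "hp l2 d Y = W"
proof -
  have np: "\<not> pr l2 (pl Y d)" using nonpar[OF d(2) par_sym[OF pl_props(3)[OF d(1)]] par_refl[OF l2]] par_sym by blast
  show ?thesis unfolding hp_def using meet_uniq2[OF l2 pl_props(1)[OF d(1)] np W] .
qed

lemma hp_same: assumes l2: "l2 \<in> L" and d: "d \<in> L" "\<not> pr d l2" and W: "W \<in> pl Y d"
  shows "hp l2 d W = hp l2 d Y"
proof -
  have e: "pl W d = pl Y d" using pl_mem[OF d(1) W] .
  have "hp l2 d Y \<in> pl W d" using hp_props(2)[OF l2 d, of Y] e by simp
  then show ?thesis using hp_unique[OF l2 d hp_props(1)[OF l2 d, of Y]] by simp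
qed

lemma pl_d_dilat: assumes dl: "dilat \<rho>" and d: "d \<in> L" and W: "W \<in> pl Y d"
  shows "\<rho> W \<in> pl (\<rho> Y) d"
proof (cases "W = Y")
  case True then show ?thesis using pl_props(2)[OF d] by simp
next
  case False
  have e: "ln Y W = pl Y d" using ln_pl(1)[OF d W] False by auto
  have "\<rho> W \<in> pl (\<rho> Y) (ln Y W)" using dilat_pl[OF dl False[symmetric]] .
  then show ?thesis using e pl_pareq[OF pl_props(3)[OF d]] by metis
qed

lemma trl_d: assumes bg: big and d: "d \<in> L" and W: "W \<in> pl Z d"
  shows "trl Z W Y \<in> pl Y d"
proof (cases "Z = W")
  case True then show ?thesis using trl_id pl_props(2)[OF d] by simp
next
  case False
  have "ln Z W = pl Z d" using ln_pl(1)[OF d W] False by auto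
  then have "pr (ln Z W) d" using pl_props(3)[OF d] by simp
  then show ?thesis using trl_facts(3)[OF False, of Y] pl_pareq by metis
qed

lemma trl_app: "big \<Longrightarrow> trl P Q P = Q" using trl_facts(1) trl_id by (cases "P = Q") auto

lemma trl_comm_app: assumes bg: big shows "trl Z A (trl Z B Z) = trl Z B (trl Z A Z)"
proof -
  have "trl Z A \<circ> trl Z B = trl Z B \<circ> trl Z A" using transl_comm[OF bg transl_trl[OF bg] transl_trl[OF bg]] .
  then show ?thesis by (metis comp_apply)
qed

lemma addh0:
  assumes bg: big and l2: "l2 \<in> L" and d: "d \<in> L" "\<not> pr d l2" and Z: "Z \<in> l2"
  shows "hp l2 d (trl Z A B) = trl Z (hp l2 d A) (hp l2 d B)"
proof -
  let ?h = "hp l2 d"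
  note hpp = hp_props[OF l2 d]
  define \<rho> where "\<rho> = trl Z A"
  define \<rho>2 where "\<rho>2 = trl Z (?h B)"
  have dr: "dilat \<rho>" "dilat \<rho>2" using transl_trl[OF bg] \<rho>_def \<rho>2_def unfolding transl_def by auto
  define S' where "S' = \<rho> B"
  define R where "R = \<rho> (?h B)"
  have F1: "R \<in> pl S' d" using pl_d_dilat[OF dr(1) d(1) hpp(2)] R_def S'_def by simp
  have R2: "R = \<rho>2 A"
    using trl_comm_app[OF bg, of Z A "?h B"] trl_app[OF bg] R_def \<rho>_def \<rho>2_def by simp
  define T where "T = trl Z (?h A) (?h B)"
  have T2: "T = \<rho>2 (?h A)"
    using trl_comm_app[OF bg, of Z "?h A" "?h B"] trl_app[OF bg] T_def \<rho>2_def by simp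
  have F2: "T \<in> pl R d" using pl_d_dilat[OF dr(2) d(1) hpp(2)] R2 T2 by simp
  have F3: "T \<in> l2"
  proof (cases "Z = ?h A")
    case True then show ?thesis using T_def trl_id hpp(1) by simp
  next
    case False
    have "ln Z (?h A) = l2" using ln_eq[OF l2 Z hpp(1) False] .
    then show ?thesis using trl_facts(3)[OF False, of "?h B"] T_def pl_self[OF l2 hpp(1)] by simp
  qed
  have "T \<in> pl S' d" using F2 pl_mem[OF d(1) F1] by simp
  then have "?h S' = T" using hp_unique[OF l2 d F3] by simp
  then show ?thesis using S'_def \<rho>_def T_def by simp
qed

lemma addh:
  assumes bg: big and l2: "l2 \<in> L" and d: "d \<in> L" "\<not> pr d l2"
  shows "hp l2 d (trl Z A B) = trl (hp l2 d Z) (hp l2 d A) (hp l2 d B)"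
proof -
  let ?h = "hp l2 d"
  note hpp = hp_props[OF l2 d]
  define \<kappa> where "\<kappa> = trl Z (?h Z)"
  have kd: "\<kappa> Y \<in> pl Y d" for Y using trl_d[OF bg d(1) hpp(2)] \<kappa>_def by simp
  have hk: "?h (\<kappa> Y) = ?h Y" for Y using hp_same[OF l2 d kd] .
  define \<tau> where "\<tau> = trl Z A"
  have c: "\<tau> \<circ> \<kappa> = \<kappa> \<circ> \<tau>" using transl_comm[OF bg transl_trl[OF bg] transl_trl[OF bg]] \<tau>_def \<kappa>_def by simp
  have kZ: "\<kappa> Z = ?h Z" using trl_app[OF bg] \<kappa>_def by simp
  define A' where "A' = \<tau> (?h Z)"
  have tau2: "\<tau> = trl (?h Z) A'"
    using D4[OF transl_trl[OF bg] transl_trl[OF bg], of "?h Z"] trl_app[OF bg] A'_def \<tau>_def by metis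
  have "?h (\<tau> B) = ?h (\<kappa> (\<tau> B))" using hk by simp
  also have "\<dots> = ?h (\<tau> (\<kappa> B))" using c by (metis comp_apply)
  also have "\<dots> = trl (?h Z) (?h A') (?h (\<kappa> B))" using addh0[OF bg l2 d hpp(1)] tau2 by simp
  also have "\<dots> = trl (?h Z) (?h A') (?h B)" using hk by simp
  finally have e: "?h (\<tau> B) = trl (?h Z) (?h A') (?h B)" .
  have "A' = \<kappa> A"
  proof -
    have "A' = \<tau> (\<kappa> Z)" using A'_def kZ by simp
    also have "\<dots> = \<kappa> (\<tau> Z)" using c by (metis comp_apply)
    finally show ?thesis using trl_app[OF bg] \<tau>_def by simp
  qed
  then have "?h A' = ?h A" using hk by simp
  then show ?thesis using e \<tau>_def by simp
qed

end


context DAP begin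

lemma hp_inj:
  assumes l2: "l2 \<in> L" and d: "d \<in> L" "\<not> pr d l2" and l1: "l1 \<in> L" "\<not> pr d l1"
    and X: "X \<in> l1" "Y \<in> l1" and e: "hp l2 d X = hp l2 d Y"
  shows "X = Y"
proof -
  have "pl X d = pl (hp l2 d X) d" using pl_mem[OF d(1) hp_props(2)[OF l2 d]] by simp
  also have "\<dots> = pl Y d" using pl_mem[OF d(1) hp_props(2)[OF l2 d]] e by simp
  finally have e2: "pl X d = pl Y d" .
  have np: "\<not> pr l1 (pl X d)" using nonpar[OF l1(2) par_sym[OF pl_props(3)[OF d(1)]] par_refl[OF l1(1)]] par_sym by blast
  show ?thesis using two_lines_pt[OF np l1(1) pl_props(1)[OF d(1)] X(1) pl_props(2)[OF d(1)] X(2)] e2 pl_props(2)[OF d(1), of Y] by simp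
qed

lemma mulh:
  assumes bg: big and l2: "l2 \<in> L" and d: "d \<in> L" "\<not> pr d l2" and ZU: "Z \<noteq> U" and d1: "\<not> pr d (ln Z U)"
    and A: "A \<in> ln Z U" "A \<noteq> Z" and B: "B \<in> ln Z U"
  shows "hp l2 d (cdil Z U A B) = cdil (hp l2 d Z) (hp l2 d U) (hp l2 d A) (hp l2 d B)"
proof -
  let ?h = "hp l2 d"
  note hpp = hp_props[OF l2 d]
  note l1 = ln_props[OF ZU]
  have inj: "X = Y" if "X \<in> ln Z U" "Y \<in> ln Z U" "?h X = ?h Y" for X Y
    using hp_inj[OF l2 d l1(1) d1 that] .
  define Z' where "Z' = ?h Z"
  define U' where "U' = ?h U"
  define A' where "A' = ?h A"
  have ZU': "Z' \<noteq> U'" using inj[OF l1(2) l1(3)] ZU Z'_def U'_def by auto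
  have l2e: "ln Z' U' = l2" using ln_eq[OF l2 _ _ ZU'] hpp(1) Z'_def U'_def by simp
  have A': "A' \<in> ln Z' U'" "A' \<noteq> Z'" using l2e hpp(1) inj[OF A(1) l1(2)] A(2) A'_def Z'_def by auto
  define \<kappa> where "\<kappa> = trl Z Z'"
  define \<kappa>' where "\<kappa>' = trl Z' Z"
  have kk: "\<kappa>' \<circ> \<kappa> = id" "\<kappa> \<circ> \<kappa>' = id" using trl_inv[OF bg] \<kappa>_def \<kappa>'_def by auto
  have Zd: "Z' \<in> pl Z d" using hpp(2) Z'_def by simp
  have Zd': "Z \<in> pl Z' d" using pl_mem[OF d(1) Zd] pl_props(2)[OF d(1)] by simp
  have kd: "\<kappa> Y \<in> pl Y d" for Y using trl_d[OF bg d(1) Zd] \<kappa>_def by simp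
  have kd': "\<kappa>' Y \<in> pl Y d" for Y using trl_d[OF bg d(1) Zd'] \<kappa>'_def by simp
  have dk: "dilat \<kappa>" "dilat \<kappa>'" using transl_trl[OF bg] \<kappa>_def \<kappa>'_def unfolding transl_def by auto
  define \<delta> where "\<delta> = cdil Z U A"
  note cf = cdil_facts[OF ZU A, folded \<delta>_def]
  have dd: "dilat \<delta>" using cf(4)[OF bg] .
  define \<delta>' where "\<delta>' = \<kappa> \<circ> \<delta> \<circ> \<kappa>'"
  have dd': "dilat \<delta>'" using dilat_comp[OF dilat_comp[OF dk(1) dd] dk(2)] \<delta>'_def by simp
  have k'Z: "\<kappa>' Z' = Z" using trl_app[OF bg] \<kappa>'_def by simp
  have kZ: "\<kappa> Z = Z'" using trl_app[OF bg] \<kappa>_def by simp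
  have f0: "\<delta>' Z' = Z'" using \<delta>'_def k'Z cf(1) kZ by simp
  have f1: "\<delta>' U' = A'"
  proof -
    have a: "\<delta>' U' \<in> l2" using dilat_fix[OF dd' f0 ZU'[symmetric]] l2e by simp
    have "\<kappa>' U' \<in> pl U' d" using kd' .
    moreover have "pl U' d = pl U d" using pl_mem[OF d(1) hpp(2)] U'_def by simp
    ultimately have "\<kappa>' U' \<in> pl U d" by simp
    then have "\<delta> (\<kappa>' U') \<in> pl A d" using pl_d_dilat[OF dd d(1)] cf(2) by metis
    moreover have "\<kappa> (\<delta> (\<kappa>' U')) \<in> pl (\<delta> (\<kappa>' U')) d" using kd .
    ultimately have "\<delta>' U' \<in> pl A d" using pl_mem[OF d(1)] \<delta>'_def by (metis comp_apply)
    then show ?thesis using hp_unique[OF l2 d a] A'_def by simp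
  qed
  define \<delta>'' where "\<delta>'' = cdil Z' U' A'"
  note cf2 = cdil_facts[OF ZU' A', folded \<delta>''_def]
  have eq: "\<delta>' = \<delta>''" using D2[OF dd' cf2(4)[OF bg] ZU'] f0 f1 cf2(1) cf2(2) by simp
  have hB: "?h B \<in> pl (\<kappa> B) d"
  proof -
    have "pl (\<kappa> B) d = pl B d" using pl_mem[OF d(1) kd] .
    then show ?thesis using hpp(2) by simp
  qed
  have e1: "\<delta>' (\<kappa> B) = \<kappa> (\<delta> B)" using \<delta>'_def kk(1) by (metis comp_apply id_apply)
  have "\<delta>' (?h B) \<in> pl (\<delta>' (\<kappa> B)) d" using pl_d_dilat[OF dd' d(1) hB] .
  moreover have "pl (\<kappa> (\<delta> B)) d = pl (\<delta> B) d" using pl_mem[OF d(1) kd] .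
  ultimately have m1: "\<delta>' (?h B) \<in> pl (\<delta> B) d" using e1 by simp
  have m2: "\<delta>' (?h B) \<in> l2"
  proof (cases "?h B = Z'")
    case True then show ?thesis using f0 hpp(1) Z'_def by simp
  next
    case False
    have "ln Z' (?h B) = l2" using ln_eq[OF l2 _ hpp(1)] hpp(1) Z'_def False by metis
    then show ?thesis using dilat_fix[OF dd' f0 False] by simp
  qed
  have "?h (\<delta> B) = \<delta>' (?h B)" using hp_unique[OF l2 d m2 m1] .
  then show ?thesis using eq \<delta>_def \<delta>''_def Z'_def U'_def A'_def by simp
qed

end


context DAP begin

lemma neg_ex1: assumes bg: big and ZU: "Z \<noteq> U" and X: "X \<in> ln Z U"
  shows "\<exists>!Y. Y \<in> ln Z U \<and> sf_add L Z U X Y = Z"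
proof (rule ex_ex1I)
  note l = ln_props[OF ZU]
  define Y where "Y = trl X Z Z"
  have Yl: "Y \<in> ln Z U"
  proof (cases "X = Z")
    case True then show ?thesis using Y_def trl_id l(2) by simp
  next
    case False
    have "Y \<in> pl Z (ln X Z)" using trl_facts(3)[OF False] Y_def by simp
    moreover have "ln X Z = ln Z U" using ln_eq[OF l(1) X l(2) False] .
    ultimately show ?thesis using pl_self[OF l(1) l(2)] by simp
  qed
  have "sf_add L Z U X Y = trl Z X Y" using add_trl[OF bg ZU X Yl] .
  also have "\<dots> = Z" using fun_cong[OF trl_inv[OF bg, of Z X], of Z] Y_def by simp
  finally show "\<exists>Y. Y \<in> ln Z U \<and> sf_add L Z U X Y = Z" using Yl by auto
next
  fix Y1 Y2 assume "Y1 \<in> ln Z U \<and> sf_add L Z U X Y1 = Z" "Y2 \<in> ln Z U \<and> sf_add L Z U X Y2 = Z"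
  then show "Y1 = Y2" using sf_add_inj2[OF ZU X] by auto
qed

lemma neg_props: assumes bg: big and ZU: "Z \<noteq> U" and X: "X \<in> ln Z U"
  shows "sf_neg L Z U X \<in> ln Z U" "sf_add L Z U X (sf_neg L Z U X) = Z"
  using theI'[OF neg_ex1[OF bg ZU X]] unfolding sf_neg_def by auto

lemma cdil_inj: assumes bg: big and ZU: "Z \<noteq> U" and X: "X \<in> ln Z U" "X \<noteq> Z" and e: "cdil Z U X Y1 = cdil Z U X Y2"
  shows "Y1 = Y2"
  using dilat_D[OF cdil_facts(4)[OF ZU X bg]] e by blast

lemma inv_ex1: assumes bg: big and ZU: "Z \<noteq> U" and X: "X \<in> ln Z U" "X \<noteq> Z"
  shows "\<exists>!Y. Y \<in> ln Z U \<and> sf_mul L Z U X Y = U"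
proof (rule ex_ex1I)
  note l = ln_props[OF ZU]
  have ZX: "Z \<noteq> X" using X by auto
  have lX: "ln Z X = ln Z U" using ln_eq[OF l(1) l(2) X(1) ZX] .
  have U': "U \<in> ln Z X" "U \<noteq> Z" using lX l(3) ZU by auto
  define Y where "Y = cdil Z X U U"
  have Yl: "Y \<in> ln Z U" using cdil_facts(3)[OF ZX U', of U] ZU Y_def by simp
  have c: "cdil Z U X \<circ> cdil Z X U = id"
  proof (rule D2[OF dilat_comp[OF cdil_facts(4)[OF ZU X bg] cdil_facts(4)[OF ZX U' bg]] dilat_id ZX])
    show "(cdil Z U X \<circ> cdil Z X U) Z = id Z" using cdil_facts(1)[OF ZU X] cdil_facts(1)[OF ZX U'] by simp
    show "(cdil Z U X \<circ> cdil Z X U) X = id X" using cdil_facts(2)[OF ZU X] cdil_facts(2)[OF ZX U'] by simp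
  qed
  have "sf_mul L Z U X Y = cdil Z U X Y" using mul_cdil[OF bg ZU X Yl] .
  also have "\<dots> = U" using fun_cong[OF c, of U] Y_def by simp
  finally show "\<exists>Y. Y \<in> ln Z U \<and> sf_mul L Z U X Y = U" using Yl by auto
next
  fix Y1 Y2 assume a: "Y1 \<in> ln Z U \<and> sf_mul L Z U X Y1 = U" "Y2 \<in> ln Z U \<and> sf_mul L Z U X Y2 = U"
  then have "cdil Z U X Y1 = cdil Z U X Y2" using mul_cdil[OF bg ZU X, of Y1] mul_cdil[OF bg ZU X, of Y2] by simp
  then show "Y1 = Y2" using cdil_inj[OF bg ZU X] by auto
qed

lemma inv_props: assumes bg: big and ZU: "Z \<noteq> U" and X: "X \<in> ln Z U" "X \<noteq> Z"
  shows "sf_inv L Z U X \<in> ln Z U" "sf_mul L Z U X (sf_inv L Z U X) = U"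
  using theI'[OF inv_ex1[OF bg ZU X]] unfolding sf_inv_def by auto

lemma sub_props: assumes bg: big and ZU: "Z \<noteq> U" and B: "B \<in> ln Z U" and C: "C \<in> ln Z U"
  shows "sf_sub L Z U B C \<in> ln Z U" "B \<noteq> C \<Longrightarrow> sf_sub L Z U B C \<noteq> Z"
proof -
  note N = neg_props[OF bg ZU C]
  show "sf_sub L Z U B C \<in> ln Z U" unfolding sf_sub_def using sf_add_in[OF ZU B N(1)] .
  assume BC: "B \<noteq> C"
  show "sf_sub L Z U B C \<noteq> Z"
  proof
    assume "sf_sub L Z U B C = Z"
    then have e: "trl Z B (sf_neg L Z U C) = trl Z C (sf_neg L Z U C)"
      unfolding sf_sub_def using N(2) add_trl[OF bg ZU B N(1)] add_trl[OF bg ZU C N(1)] by simp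
    define Nn where "Nn = sf_neg L Z U C"
    have c1: "trl Z B Nn = trl Z Nn B" using trl_comm_app[OF bg, of Z B Nn] trl_app[OF bg] by simp
    have c2: "trl Z C Nn = trl Z Nn C" using trl_comm_app[OF bg, of Z C Nn] trl_app[OF bg] by simp
    have "trl Z Nn B = trl Z Nn C" using e c1 c2 Nn_def by simp
    then have "B = C"
    proof (cases "Z = Nn")
      case True then show ?thesis using \<open>trl Z Nn B = trl Z Nn C\<close> trl_id by simp
    next
      case False then show ?thesis using dilat_D[OF trl_facts(4)[OF False bg]] \<open>trl Z Nn B = trl Z Nn C\<close> by blast
    qed
    then show False using BC by simp
  qed
qed

end


context DAP begin

lemma pres_all:
  assumes bg: big and ZU: "Z \<noteq> U" and l2: "l2 \<in> L" and d: "d \<in> L" "\<not> pr d l2" and d1: "\<not> pr d (ln Z U)"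
    and A: "A \<in> ln Z U" and B: "B \<in> ln Z U" and C: "C \<in> ln Z U" and BC: "B \<noteq> C"
  shows "hp l2 d (ratio L Z U A B C) = ratio L (hp l2 d Z) (hp l2 d U) (hp l2 d A) (hp l2 d B) (hp l2 d C)"
proof -
  let ?h = "hp l2 d"
  note hpp = hp_props[OF l2 d]
  note l1 = ln_props[OF ZU]
  have inj: "X = Y" if "X \<in> ln Z U" "Y \<in> ln Z U" "?h X = ?h Y" for X Y
    using hp_inj[OF l2 d l1(1) d1 that] .
  define Z' where "Z' = ?h Z"
  define U' where "U' = ?h U"
  have ZU': "Z' \<noteq> U'" using inj[OF l1(2) l1(3)] ZU Z'_def U'_def by auto
  have l2e: "ln Z' U' = l2" using ln_eq[OF l2 _ _ ZU'] hpp(1) Z'_def U'_def by simp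
  have hin: "?h X \<in> ln Z' U'" for X using hpp(1) l2e by simp
  have padd: "?h (sf_add L Z U X Y) = sf_add L Z' U' (?h X) (?h Y)" if "X \<in> ln Z U" "Y \<in> ln Z U" for X Y
  proof -
    have "?h (sf_add L Z U X Y) = ?h (trl Z X Y)" using add_trl[OF bg ZU that] by simp
    also have "\<dots> = trl Z' (?h X) (?h Y)" using addh[OF bg l2 d] Z'_def by simp
    also have "\<dots> = sf_add L Z' U' (?h X) (?h Y)" using add_trl[OF bg ZU' hin hin] by simp
    finally show ?thesis .
  qed
  have pmul: "?h (sf_mul L Z U X Y) = sf_mul L Z' U' (?h X) (?h Y)" if "X \<in> ln Z U" "Y \<in> ln Z U" for X Y
  proof (cases "X = Z")
    case True
    then show ?thesis using sf_mul_Zl[OF ZU that(2)] sf_mul_Zl[OF ZU' hin] Z'_def by simp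
  next
    case False
    have hX: "?h X \<noteq> Z'" using inj[OF that(1) l1(2)] False Z'_def by auto
    have "?h (sf_mul L Z U X Y) = ?h (cdil Z U X Y)" using mul_cdil[OF bg ZU that(1) False that(2)] by simp
    also have "\<dots> = cdil Z' U' (?h X) (?h Y)" using mulh[OF bg l2 d ZU d1 that(1) False that(2)] Z'_def U'_def by simp
    also have "\<dots> = sf_mul L Z' U' (?h X) (?h Y)" using mul_cdil[OF bg ZU' hin hX hin] by simp
    finally show ?thesis .
  qed
  have pneg: "?h (sf_neg L Z U X) = sf_neg L Z' U' (?h X)" if X: "X \<in> ln Z U" for X
  proof -
    note N = neg_props[OF bg ZU X]
    have w: "?h (sf_neg L Z U X) \<in> ln Z' U' \<and> sf_add L Z' U' (?h X) (?h (sf_neg L Z U X)) = Z'"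
      using hin padd[OF X N(1)] N(2) Z'_def by simp
    show ?thesis unfolding sf_neg_def[of L Z' U'] using the1_equality[OF neg_ex1[OF bg ZU' hin] w] by simp
  qed
  have psub: "?h (sf_sub L Z U X Y) = sf_sub L Z' U' (?h X) (?h Y)" if "X \<in> ln Z U" "Y \<in> ln Z U" for X Y
    unfolding sf_sub_def using padd[OF that(1) neg_props(1)[OF bg ZU that(2)]] pneg[OF that(2)] by simp
  have pinv: "?h (sf_inv L Z U X) = sf_inv L Z' U' (?h X)" if X: "X \<in> ln Z U" "X \<noteq> Z" for X
  proof -
    note I = inv_props[OF bg ZU X]
    have hX: "?h X \<noteq> Z'" using inj[OF X(1) l1(2)] X(2) Z'_def by auto
    have w: "?h (sf_inv L Z U X) \<in> ln Z' U' \<and> sf_mul L Z' U' (?h X) (?h (sf_inv L Z U X)) = U'"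
      using hin pmul[OF X(1) I(1)] I(2) U'_def by simp
    show ?thesis unfolding sf_inv_def[of L Z' U'] using the1_equality[OF inv_ex1[OF bg ZU' hin hX] w] by simp
  qed
  note S1 = sub_props[OF bg ZU B C] and S2 = sub_props[OF bg ZU A C]
  have "?h (ratio L Z U A B C) = sf_mul L Z' U' (?h (sf_inv L Z U (sf_sub L Z U B C))) (?h (sf_sub L Z U A C))"
    unfolding ratio_def using pmul[OF inv_props(1)[OF bg ZU S1(1) S1(2)[OF BC]] S2(1)] by simp
  also have "\<dots> = ratio L Z' U' (?h A) (?h B) (?h C)"
    unfolding ratio_def using pinv[OF S1(1) S1(2)[OF BC]] psub[OF B C] psub[OF A C] by simp
  finally show ?thesis using Z'_def U'_def by simp
qed

end


context AP begin

lemma small_ratio: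
  assumes ZU: "Z \<noteq> U" and two: "\<And>X. X \<in> ln Z U \<Longrightarrow> X = Z \<or> X = U"
    and A: "A \<in> ln Z U" and B: "B \<in> ln Z U" and C: "C \<in> ln Z U" and BC: "B \<noteq> C"
  shows "ratio L Z U A B C = (if A = C then Z else U)"
proof -
  note l = ln_props[OF ZU]
  have aZl: "sf_add L Z U Z Y = Y" if "Y \<in> ln Z U" for Y using sf_add_Zl[OF ZU that] .
  have aZr: "sf_add L Z U X Z = X" if "X \<in> ln Z U" for X using sf_add_Zr[OF ZU that] .
  have aUU: "sf_add L Z U U U = Z"
  proof -
    have "sf_add L Z U U U \<noteq> U"
    proof
      assume "sf_add L Z U U U = U"
      then have "sf_add L Z U U U = sf_add L Z U U Z" using aZr[OF l(3)] by simp
      then show False using sf_add_inj2[OF ZU l(3) l(3) l(2)] ZU by simp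
    qed
    then show ?thesis using two[OF sf_add_in[OF ZU l(3) l(3)]] by auto
  qed
  have aXX: "sf_add L Z U X X = Z" if "X \<in> ln Z U" for X
  proof -
    have "X = Z \<or> X = U" using two[OF that] .
    then show ?thesis
    proof
      assume "X = Z" then show ?thesis using aZl[OF l(2)] by simp
    next
      assume "X = U" then show ?thesis using aUU by simp
    qed
  qed
  have neg: "sf_neg L Z U X = X" if X: "X \<in> ln Z U" for X
  proof -
    have ex: "\<exists>!Y. Y \<in> ln Z U \<and> sf_add L Z U X Y = Z"
    proof (rule ex1I[of _ X])
      show "X \<in> ln Z U \<and> sf_add L Z U X X = Z" using X aXX[OF X] by simp
      fix Y assume a: "Y \<in> ln Z U \<and> sf_add L Z U X Y = Z"
      then have "sf_add L Z U X Y = sf_add L Z U X X" using aXX[OF X] by simp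
      then show "Y = X" using sf_add_inj2[OF ZU X _ X] a by simp
    qed
    show ?thesis unfolding sf_neg_def using the1_equality[OF ex] aXX[OF X] X by simp
  qed
  have sub: "sf_sub L Z U X Y = (if X = Y then Z else U)" if "X \<in> ln Z U" "Y \<in> ln Z U" for X Y
  proof -
    have e: "sf_sub L Z U X Y = sf_add L Z U X Y" unfolding sf_sub_def using neg[OF that(2)] by simp
    have "X = Z \<or> X = U" "Y = Z \<or> Y = U" using two that by auto
    then show ?thesis
    proof (elim disjE)
      assume "X = Z" "Y = Z" then show ?thesis using e aXX[OF l(2)] by simp
    next
      assume "X = Z" "Y = U" then show ?thesis using e aZl[OF l(3)] ZU by simp
    next
      assume "X = U" "Y = Z" then show ?thesis using e aZr[OF l(3)] ZU by simp
    next
      assume "X = U" "Y = U" then show ?thesis using e aXX[OF l(3)] by simp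
    qed
  qed
  have mUU: "sf_mul L Z U U U = U" using sf_mul_Ur[OF ZU l(3)] .
  have mUZ: "sf_mul L Z U U Z = Z" using sf_mul_Zr[OF ZU] .
  have inv: "sf_inv L Z U U = U"
  proof -
    have ex: "\<exists>!Y. Y \<in> ln Z U \<and> sf_mul L Z U U Y = U"
    proof (rule ex1I[of _ U])
      show "U \<in> ln Z U \<and> sf_mul L Z U U U = U" using l(3) mUU by simp
      fix Y assume "Y \<in> ln Z U \<and> sf_mul L Z U U Y = U"
      then have "Y = Z \<or> Y = U" "sf_mul L Z U U Y = U" using two by auto
      then show "Y = U" using mUZ ZU by auto
    qed
    show ?thesis unfolding sf_inv_def using the1_equality[OF ex] l(3) mUU by simp
  qed
  have sBC: "sf_sub L Z U B C = U" using sub[OF B C] BC by simp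
  show ?thesis unfolding ratio_def sBC inv using sub[OF A C] mUU mUZ by auto
qed

end


theorem mainTheorem12:
  fixes L :: "'p set set" and Z U A B C :: 'p and l2 :: "'p set" and f :: "'p \<Rightarrow> 'p"
  assumes "desargues_affine_plane L"
    and "Z \<noteq> U"
    and "l2 \<in> L"
    and "parallel_projection L (line_of L Z U) l2 f"
    and "A \<in> line_of L Z U" and "B \<in> line_of L Z U" and "C \<in> line_of L Z U"
    and "B \<noteq> C"
  shows "f (ratio L Z U A B C) = ratio L (f Z) (f U) (f A) (f B) (f C)"
proof -
  have ap: "affine_plane L" and ds: "desargues L" using assms(1) unfolding desargues_affine_plane_def by auto
  have tw: "\<exists>A B::'p. A \<noteq> B" using assms(2) by auto
  interpret DAP L by (unfold_locales) (rule ap, rule tw, rule ds)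
  have ZU: "Z \<noteq> U" and l2: "l2 \<in> L" and A: "A \<in> ln Z U" and B: "B \<in> ln Z U" and C: "C \<in> ln Z U" and BC: "B \<noteq> C"
    using assms by auto
  note l1 = ln_props[OF ZU]
  obtain d where d: "d \<in> L" "\<not> pr d (ln Z U)" "\<not> pr d l2"
    and fd: "\<And>X. X \<in> ln Z U \<Longrightarrow> f X \<in> l2 \<and> f X \<in> pl X d"
    using assms(4) unfolding parallel_projection_def by blast
  have d2: "d \<in> L" "\<not> pr d l2" using d by auto
  have fh: "f X = hp l2 d X" if "X \<in> ln Z U" for X
    using hp_unique[OF l2 d2] fd[OF that] by metis
  have inj: "X = Y" if "X \<in> ln Z U" "Y \<in> ln Z U" "f X = f Y" for X Y
    using hp_inj[OF l2 d2 l1(1) d(2) that(1,2)] fh that by simp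
  have fZU: "f Z \<noteq> f U" using inj[OF l1(2) l1(3)] ZU by auto
  have l2e: "ln (f Z) (f U) = l2" using ln_eq[OF l2 _ _ fZU] fd l1 by auto
  show ?thesis
  proof (cases big)
    case True
    have S2: "sf_sub L Z U A C \<in> ln Z U" using sub_props(1)[OF True ZU A C] .
    have rin: "ratio L Z U A B C \<in> ln Z U" unfolding ratio_def using sf_mul_in[OF ZU S2] .
    have "f (ratio L Z U A B C) = hp l2 d (ratio L Z U A B C)" using fh[OF rin] .
    also have "\<dots> = ratio L (hp l2 d Z) (hp l2 d U) (hp l2 d A) (hp l2 d B) (hp l2 d C)"
      using pres_all[OF True ZU l2 d2 d(2) A B C BC] .
    also have "\<dots> = ratio L (f Z) (f U) (f A) (f B) (f C)" using fh A B C l1 by simp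
    finally show ?thesis .
  next
    case False
    have two1: "X = Z \<or> X = U" if "X \<in> ln Z U" for X
      using not_big_small[OF False l1(1) that l1(2) l1(3)] ZU by auto
    have two2: "X = f Z \<or> X = f U" if "X \<in> ln (f Z) (f U)" for X
      using not_big_small[OF False ln_props(1)[OF fZU] that ln_props(2,3)[OF fZU]] fZU by auto
    have r1: "ratio L Z U A B C = (if A = C then Z else U)" using small_ratio[OF ZU two1 A B C BC] .
    have fin: "f X \<in> ln (f Z) (f U)" if "X \<in> ln Z U" for X using fd[OF that] l2e by simp
    have fBC: "f B \<noteq> f C" using inj[OF B C] BC by auto
    have r2: "ratio L (f Z) (f U) (f A) (f B) (f C) = (if f A = f C then f Z else f U)"
      using small_ratio[OF fZU two2 fin[OF A] fin[OF B] fin[OF C] fBC] .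
    have "(f A = f C) = (A = C)" using inj[OF A C] by auto
    then show ?thesis using r1 r2 by simp
  qed
qed



end
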